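(* Let the Mathieu group $M_{24}$ act on its natural $24$-element set $\Theta$, with a distinguished point $F\in\Theta$. Then (a) $hd((M_{24})^{\triangle}_{-})\geq 14$; (b) $M(23,14)\geq |M_{24}|=244{,}823{,}040$; (c) $M(22,14)\geq |M_{24}|/23=10{,}644{,}480$; (d) $M(21,14)\geq |M_{24}|/(23\cdot 22)=483{,}840$.
   Context: $hd(\pi,\sigma)$ is the number of points at which permutations $\pi,\sigma$ differ; $hd(A)$ is the minimum over distinct pairs in $A$. For a permutation $\pi$ of $\Theta$, $\pi^{\triangle}$ is defined by $\pi^{\triangle}(\pi^{-1}(F))=\pi(F)$, $\pi^{\triangle}(F)=F$, $\pi^{\triangle}(x)=\pi(x)$ otherwise; $\pi^{\triangle}_{-}$ is its restriction to $\Theta\setminus\{F\}$; for a set $S$ of permutations, $S^{\triangle}_{-}=\{\pi^{\triangle}_{-}:\pi\in S\}$. $M(n,d)$ is the maximum size of a set of permutations of an $n$-element set with pairwise Hamming distance at least $d$. *)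

theory Defs
  imports "HOL-Combinatorics.Permutations"
begin

definition Theta :: "nat set" where "Theta = {0..<24}"

text \<open>Extended binary Golay code (words = supports, subsets of Theta):
  spanned over GF(2) by the 12 cyclic shifts x^i g(x), i < 12, of the
  generator polynomial g(x) = 1 + x^2 + x^4 + x^5 + x^6 + x^10 + x^11 of the
  binary quadratic-residue code of length 23, extended by a parity coordinate 23.\<close>
definition golay_gens :: "nat set set" where
  "golay_gens = (\<lambda>i. insert 23 ((\<lambda>e. (e + i) mod 23) ` {0,2,4,5,6,10,11})) ` {0..<12}"

inductive_set golay :: "nat set set" where
  zero: "{} \<in> golay"
| add: "B \<in> golay_gens \<Longrightarrow> X \<in> golay \<Longrightarrow> (B - X) \<union> (X - B) \<in> golay"

definition M24 :: "(nat \<Rightarrow> nat) set" where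
  "M24 = {p. p permutes Theta \<and> (\<forall>C \<in> golay. p ` C \<in> golay)}"

definition hd_on :: "'a set \<Rightarrow> ('a \<Rightarrow> 'a) \<Rightarrow> ('a \<Rightarrow> 'a) \<Rightarrow> nat" where
  "hd_on S p q = card {x \<in> S. p x \<noteq> q x}"

text \<open>pi^triangle; as a function it already fixes F and is the identity outside
  Theta, so it also serves as the restriction pi^triangle_- to Theta - {F}.\<close>
definition tri :: "nat \<Rightarrow> (nat \<Rightarrow> nat) \<Rightarrow> (nat \<Rightarrow> nat)" where
  "tri F p = (\<lambda>x. if x = F then F else if p x = F then p F else p x)"

definition perm_code :: "nat \<Rightarrow> nat \<Rightarrow> (nat \<Rightarrow> nat) set \<Rightarrow> bool" where
  "perm_code n d A \<longleftrightarrow> (\<forall>p\<in>A. p permutes {0..<n}) \<and>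
     (\<forall>p\<in>A. \<forall>q\<in>A. p \<noteq> q \<longrightarrow> d \<le> hd_on {0..<n} p q)"

definition Mnd :: "nat \<Rightarrow> nat \<Rightarrow> nat" where
  "Mnd n d = Max (card ` {A. perm_code n d A})"

end

theory Submission
  imports Defs
begin

definition gl :: "bool list list" where "gl = [[True,False,True,False,True,True,True,False,False,False,True,True,False,False,False,False,False,False,False,False,False,False,False,True], [False,True,False,True,False,True,True,True,False,False,False,True,True,False,False,False,False,False,False,False,False,False,False,True], [False,False,True,False,True,False,True,True,True,False,False,False,True,True,False,False,False,False,False,False,False,False,False,True], [False,False,False,True,False,True,False,True,True,True,False,False,False,True,True,False,False,False,False,False,False,False,False,True], [False,False,False,False,True,False,True,False,True,True,True,False,False,False,True,True,False,False,False,False,False,False,False,True], [False,False,False,False,False,True,False,True,False,True,True,True,False,False,False,True,True,False,False,False,False,False,False,True], [False,False,False,False,False,False,True,False,True,False,True,True,True,False,False,False,True,True,False,False,False,False,False,True], [False,False,False,False,False,False,False,True,False,True,False,True,True,True,False,False,False,True,True,False,False,False,False,True], [False,False,False,False,False,False,False,False,True,False,True,False,True,True,True,False,False,False,True,True,False,False,False,True], [False,False,False,False,False,False,False,False,False,True,False,True,False,True,True,True,False,False,False,True,True,False,False,True], [False,False,False,False,False,False,False,False,False,False,True,False,True,False,True,True,True,False,False,False,True,True,False,True], [False,False,False,False,False,False,False,False,False,False,False,True,False,True,False,True,True,True,False,False,False,True,True,True]]"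

fun xorw :: "bool list \<Rightarrow> bool list \<Rightarrow> bool list" where
  "xorw (a#as) (b#bs) = (a \<noteq> b) # xorw as bs" | "xorw _ _ = []"

definition zw :: "bool list" where "zw = replicate 24 False"

fun supl :: "nat \<Rightarrow> bool list \<Rightarrow> nat list" where
  "supl n [] = []" | "supl n (b#bs) = (if b then n # supl (Suc n) bs else supl (Suc n) bs)"

definition setw :: "bool list \<Rightarrow> nat set" where "setw w = set (supl 0 w)"

fun cnt :: "bool list \<Rightarrow> nat" where
  "cnt [] = 0" | "cnt (a#as) = (if a then Suc (cnt as) else cnt as)"

lemma len_xorw[simp]: "length (xorw a b) = min (length a) (length b)"
  by (induction a b rule: xorw.induct) auto

lemma mem_supl: "x \<in> set (supl n w) \<longleftrightarrow> n \<le> x \<and> x < n + length w \<and> w ! (x - n)"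
proof (induction w arbitrary: n)
  case Nil then show ?case by simp
next
  case (Cons b bs)
  show ?case
  proof (cases "x = n")
    case True then show ?thesis using Cons by auto
  next
    case False
    then have "(n \<le> x \<and> x < n + length (b#bs) \<and> (b#bs) ! (x - n)) \<longleftrightarrow>
        (Suc n \<le> x \<and> x < Suc n + length bs \<and> bs ! (x - Suc n))"
    proof (cases "n < x")
      case True
      then obtain m where "x = Suc (n + m)" using less_imp_Suc_add by blast
      then show ?thesis by simp
    qed (use False in auto)
    then show ?thesis using Cons False by auto
  qed
qed

lemma distinct_supl: "distinct (supl n w)"
proof (induction w arbitrary: n)
  case (Cons b bs) then show ?case by (auto simp: mem_supl)
qed simp

lemma card_setw: "card (setw w) = cnt w"
proof -
  have "length (supl n w) = cnt w" for n by (induction w arbitrary: n) auto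
  then show ?thesis unfolding setw_def using distinct_supl distinct_card by metis
qed

lemma setw_sub: "setw w \<subseteq> {0..<length w}"
  by (auto simp: setw_def mem_supl)

lemma mem_setw: "x \<in> setw w \<longleftrightarrow> x < length w \<and> w ! x"
  by (simp add: setw_def mem_supl)

lemma setw_xorw: "length a = length b \<Longrightarrow> setw (xorw a b) = (setw a - setw b) \<union> (setw b - setw a)"
proof -
  assume l: "length a = length b"
  have "x < length a \<Longrightarrow> xorw a b ! x = (a ! x \<noteq> b ! x)" for x
    using l
  proof (induction a b arbitrary: x rule: xorw.induct)
    case (1 a as b bs) then show ?case by (cases x) auto
  qed auto
  then show ?thesis using l by (auto simp: mem_setw)
qed

lemma setw_zw[simp]: "setw zw = {}"
  by (auto simp: mem_setw zw_def)

lemma xorw_comm: "xorw a b = xorw b a"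
  by (induction a b rule: xorw.induct) auto

lemma xorw_assoc: "xorw (xorw a b) c = xorw a (xorw b c)"
proof (induction a b arbitrary: c rule: xorw.induct)
  case (1 a as b bs) then show ?case by (cases c) auto
qed auto

lemma xorw_self: "xorw a (xorw a b) = b" if "length a = length b"
  using that
proof (induction a b rule: xorw.induct)
  case (1 a as b bs) then show ?case by auto
qed auto

lemma xorw_zw: "length w = 24 \<Longrightarrow> xorw w zw = w"
proof -
  have "xorw w (replicate (length w) False) = w" by (induction w) auto
  then show "length w = 24 \<Longrightarrow> xorw w zw = w" by (simp add: zw_def)
qed

lemma gl_len: "\<forall>g\<in>set gl. length g = 24" by (simp add: gl_def)
lemma gl_length: "length gl = 12" by (simp add: gl_def)

lemma sup_gl: "map (supl 0) gl = [[0,2,4,5,6,10,11,23],[1,3,5,6,7,11,12,23],[2,4,6,7,8,12,13,23],[3,5,7,8,9,13,14,23],[4,6,8,9,10,14,15,23],[5,7,9,10,11,15,16,23],[6,8,10,11,12,16,17,23],[7,9,11,12,13,17,18,23],[8,10,12,13,14,18,19,23],[9,11,13,14,15,19,20,23],[10,12,14,15,16,20,21,23],[11,13,15,16,17,21,22,23]]"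
  by code_simp

lemma golay_gens_eq: "golay_gens = setw ` set gl"
proof -
  have "setw ` set gl = set (map set (map (supl 0) gl))" by (auto simp: setw_def)
  also have "map set (map (supl 0) gl) = map (\<lambda>i. insert 23 ((\<lambda>e. (e + i) mod 23) ` {0,2,4,5,6,10,11})) [0..<12]"
    unfolding sup_gl by (auto simp: upt_rec)
  finally show ?thesis unfolding golay_gens_def by (metis atLeastLessThan_upt list.set_map)
qed

definition cwd :: "nat list \<Rightarrow> bool list" where
  "cwd c = foldr (\<lambda>k acc. xorw (gl ! k) acc) c zw"

lemma gl_nth_len: "k < 12 \<Longrightarrow> length (gl ! k) = 24"
  using gl_len gl_length by (metis nth_mem)

lemma cwd_len: "list_all (\<lambda>k. k < 12) c \<Longrightarrow> length (cwd c) = 24"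
  by (induction c) (auto simp: cwd_def zw_def gl_nth_len)

lemma gen_in: "k < 12 \<Longrightarrow> setw (gl ! k) \<in> golay_gens"
  unfolding golay_gens_eq using gl_length by auto

lemma cwd_golay: "list_all (\<lambda>k. k < 12) c \<Longrightarrow> setw (cwd c) \<in> golay"
proof (induction c)
  case Nil then show ?case by (simp add: cwd_def golay.zero)
next
  case (Cons k c)
  then have l: "length (gl ! k) = length (cwd c)" using cwd_len gl_nth_len by simp
  have "cwd (k # c) = xorw (gl ! k) (cwd c)" by (simp add: cwd_def)
  then have "setw (cwd (k # c)) = (setw (gl ! k) - setw (cwd c)) \<union> (setw (cwd c) - setw (gl ! k))"
    using setw_xorw[OF l] by simp
  then show ?case using Cons golay.add gen_in by auto
qed

lemma golay_symdiff: "X \<in> golay \<Longrightarrow> Y \<in> golay \<Longrightarrow> (X - Y) \<union> (Y - X) \<in> golay"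
proof (induction X rule: golay.induct)
  case zero then show ?case by simp
next
  case (add B X)
  have "((B - X) \<union> (X - B) - Y) \<union> (Y - ((B - X) \<union> (X - B))) = (B - ((X - Y) \<union> (Y - X))) \<union> (((X - Y) \<union> (Y - X)) - B)"
    by blast
  then show ?case using add golay.add by metis
qed

fun cr :: "bool list list \<Rightarrow> bool list list" where
  "cr [] = [zw]" | "cr (g#gs) = cr gs @ map (xorw g) (cr gs)"

lemma cr_len: "\<forall>g\<in>set gs. length g = 24 \<Longrightarrow> \<forall>v\<in>set (cr gs). length v = 24"
  by (induction gs) (auto simp: zw_def)

lemma cr_closed: "\<forall>g\<in>set gs. length g = 24 \<Longrightarrow> g \<in> set gs \<Longrightarrow> v \<in> set (cr gs) \<Longrightarrow> xorw g v \<in> set (cr gs)"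
proof (induction gs arbitrary: v)
  case Nil then show ?case by simp
next
  case (Cons h gs)
  have "\<forall>g\<in>set gs. length g = 24" using Cons.prems(1) by simp
  then have L: "\<forall>v\<in>set (cr gs). length v = 24" using cr_len by blast
  have lh: "length h = 24" "length g = 24" using Cons.prems by auto
  from Cons.prems(3) consider "v \<in> set (cr gs)" | w where "w \<in> set (cr gs)" "v = xorw h w" by auto
  then show ?case
  proof cases
    case 1
    show ?thesis
    proof (cases "g = h")
      case True then show ?thesis using 1 by simp
    next
      case False
      then have "g \<in> set gs" using Cons.prems by simp
      then show ?thesis using Cons.IH Cons.prems 1 by simp
    qed
  next
    case 2
    show ?thesis
    proof (cases "g = h")
      case True then show ?thesis using 2 xorw_self L lh by simp
    next
      case False
      then have g: "g \<in> set gs" using Cons.prems by simp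
      have "xorw g v = xorw h (xorw g w)" using 2 by (metis xorw_assoc xorw_comm)
      moreover have "xorw g w \<in> set (cr gs)" using Cons.IH Cons.prems g 2 by simp
      ultimately show ?thesis by simp
    qed
  qed
qed

lemma golay_sub: "X \<in> golay \<Longrightarrow> \<exists>v\<in>set (cr gl). X = setw v"
proof (induction X rule: golay.induct)
  case zero
  have "zw \<in> set (cr gs)" for gs by (induction gs) auto
  then show ?case using setw_zw by metis
next
  case (add B X)
  then obtain v where v: "v \<in> set (cr gl)" "X = setw v" by blast
  from add(1) obtain g where g: "g \<in> set gl" "B = setw g" unfolding golay_gens_eq by auto
  have "length g = length v" using g v gl_len cr_len[OF gl_len] by simp
  then have "(B - X) \<union> (X - B) = setw (xorw g v)" using setw_xorw g v by simp
  moreover have "xorw g v \<in> set (cr gl)" using cr_closed[OF gl_len] g v by simp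
  ultimately show ?case by blast
qed

lemma golay_Theta: "X \<in> golay \<Longrightarrow> X \<subseteq> Theta"
  using golay_sub cr_len[OF gl_len] setw_sub unfolding Theta_def by fastforce

lemma finite_golay: "finite golay"
proof -
  have "golay \<subseteq> Pow Theta" using golay_Theta by auto
  then show ?thesis by (rule finite_subset) (simp add: Theta_def)
qed

definition okw :: "bool list \<Rightarrow> bool" where "okw w = (w = zw \<or> 8 \<le> cnt w)"

fun allw :: "bool list list \<Rightarrow> bool list \<Rightarrow> bool" where
  "allw [] w = (w = zw \<or> 8 \<le> cnt w)" | "allw (g#gs) w = (allw gs w \<and> allw gs (xorw g w))"

lemma allw_iff: "\<forall>g\<in>set gs. length g = 24 \<Longrightarrow> length u = 24 \<Longrightarrow>
   allw gs u = (\<forall>v\<in>set (cr gs). okw (xorw v u))"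
proof (induction gs arbitrary: u)
  case Nil
  have "xorw zw u = u" using xorw_zw[OF Nil(2)] xorw_comm by metis
  then show ?case by (simp add: okw_def)
next
  case (Cons g gs)
  have lg: "length g = 24" using Cons.prems by simp
  have "allw (g#gs) u = (allw gs u \<and> allw gs (xorw g u))" by simp
  also have "... = ((\<forall>v\<in>set (cr gs). okw (xorw v u)) \<and> (\<forall>v\<in>set (cr gs). okw (xorw v (xorw g u))))"
    using Cons.IH Cons.prems lg by simp
  also have "... = (\<forall>v\<in>set (cr (g#gs)). okw (xorw v u))"
  proof -
    have "xorw v (xorw g u) = xorw (xorw g v) u" for v by (metis xorw_assoc xorw_comm)
    then show ?thesis by auto
  qed
  finally show ?case .
qed

lemma allw_gl: "allw gl zw"
  unfolding gl_def zw_def by code_simp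

lemma min_weight: "X \<in> golay \<Longrightarrow> X \<noteq> {} \<Longrightarrow> 8 \<le> card X"
proof -
  assume X: "X \<in> golay" "X \<noteq> {}"
  then obtain v where v: "v \<in> set (cr gl)" "X = setw v" using golay_sub by blast
  have lv: "length v = 24" using v cr_len[OF gl_len] by simp
  have "okw (xorw v zw)" using allw_iff[OF gl_len, of zw] allw_gl v by (simp add: zw_def)
  then have "okw v" using xorw_zw[OF lv] by simp
  then show ?thesis using X v card_setw by (auto simp: okw_def)
qed

lemma octad_lit: "list_all (\<lambda>k. k < 12) c \<Longrightarrow> set (supl 0 (cwd c)) = X \<Longrightarrow> X \<in> golay"
  using cwd_golay unfolding setw_def by metis

lemma oct0: "{0,1,3,12,15,21,22,23} \<in> golay"
  by (rule octad_lit[where c="[0,1,2,6,11]"]; code_simp)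

lemma oct1: "{0,1,2,3,5,14,17,23} \<in> golay"
  by (rule octad_lit[where c="[0,1,4,5,6]"]; code_simp)

lemma oct2: "{0,2,3,7,16,17,21,22} \<in> golay"
  by (rule octad_lit[where c="[0,3,4,11]"]; code_simp)

lemma oct3: "{3,8,10,14,17,21,22,23} \<in> golay"
  by (rule octad_lit[where c="[3,5,11]"]; code_simp)

lemma oct4: "{2,3,5,8,14,16,20,21} \<in> golay"
  by (rule octad_lit[where c="[2,3,4,10]"]; code_simp)

lemma oct5: "{1,3,6,9,14,20,21,23} \<in> golay"
  by (rule octad_lit[where c="[1,5,10]"]; code_simp)

lemma oct6: "{0,2,11,14,20,21,22,23} \<in> golay"
  by (rule octad_lit[where c="[0,4,5,7,8,9,11]"]; code_simp)

lemma oct7: "{0,2,4,5,6,10,11,23} \<in> golay"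
  by (rule octad_lit[where c="[0]"]; code_simp)

lemma oct8: "{1,3,5,6,7,11,12,23} \<in> golay"
  by (rule octad_lit[where c="[1]"]; code_simp)

lemma oct9: "{1,2,6,11,13,17,20,23} \<in> golay"
  by (rule octad_lit[where c="[1,2,3,4,7,8,9]"]; code_simp)

lemma oct10: "{1,3,5,6,9,13,17,18} \<in> golay"
  by (rule octad_lit[where c="[1,7]"]; code_simp)

lemma oct11: "{1,2,3,4,5,8,11,13} \<in> golay"
  by (rule octad_lit[where c="[1,2]"]; code_simp)

lemma oct12: "{3,5,7,8,9,13,14,23} \<in> golay"
  by (rule octad_lit[where c="[3]"]; code_simp)

lemma oct13: "{4,6,8,9,10,14,15,23} \<in> golay"
  by (rule octad_lit[where c="[4]"]; code_simp)

lemma oct14: "{5,7,9,10,11,15,16,23} \<in> golay"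
  by (rule octad_lit[where c="[5]"]; code_simp)

lemma oct15: "{8,10,12,13,14,18,19,23} \<in> golay"
  by (rule octad_lit[where c="[8]"]; code_simp)

definition pl :: "nat list \<Rightarrow> nat \<Rightarrow> nat" where "pl p x = (if x < 24 then p ! x else x)"

definition chk :: "nat list \<Rightarrow> nat list list \<Rightarrow> bool" where
 "chk p cs = (length p = 24 \<and> distinct p \<and> list_all (\<lambda>i. i < 24) p \<and>
    list_all2 (\<lambda>g c. list_all (\<lambda>k. k < 12) c \<and> map (nth (cwd c)) p = g) gl cs)"

lemma Theta_lt: "x \<in> Theta \<longleftrightarrow> x < 24" by (simp add: Theta_def)

lemma M24_perm: "p \<in> M24 \<Longrightarrow> p permutes Theta" by (simp add: M24_def)
lemma M24_golay: "p \<in> M24 \<Longrightarrow> C \<in> golay \<Longrightarrow> p ` C \<in> golay" by (simp add: M24_def)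

lemma perm_image_eq:
  assumes p: "p permutes S" and A: "A \<subseteq> S" and B: "B \<subseteq> S" and h: "\<And>x. x \<in> S \<Longrightarrow> x \<in> A \<longleftrightarrow> p x \<in> B"
  shows "p ` A = B"
proof
  show "p ` A \<subseteq> B" using A h by auto
  show "B \<subseteq> p ` A"
  proof
    fix y assume y: "y \<in> B"
    then have "y \<in> p ` S" using B permutes_image[OF p] by auto
    then obtain x where x: "x \<in> S" "y = p x" by auto
    then show "y \<in> p ` A" using h y by auto
  qed
qed

lemma perm_image_symdiff: "inj p \<Longrightarrow> p ` ((B - X) \<union> (X - B)) = (p ` B - p ` X) \<union> (p ` X - p ` B)"
  by (simp add: image_Un image_set_diff)

lemma chk_M24:
  assumes c: "chk p cs"
  shows "pl p \<in> M24"
proof -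
  have len: "length p = 24" and d: "distinct p" and lt: "\<forall>i\<in>set p. i < 24"
    and la: "list_all2 (\<lambda>g c. list_all (\<lambda>k. k < 12) c \<and> map (nth (cwd c)) p = g) gl cs"
    using c by (auto simp: chk_def list_all_iff)
  have perm: "pl p permutes Theta"
  proof (rule inj_imp_permutes)
    show "inj_on (pl p) Theta"
      using d len by (auto simp: inj_on_def pl_def Theta_lt nth_eq_iff_index_eq)
    show "finite Theta" by (simp add: Theta_def)
    show "pl p x \<in> Theta" if "x \<in> Theta" for x
      using that lt len by (auto simp: pl_def Theta_lt)
    show "pl p x = x" if "x \<notin> Theta" for x using that by (simp add: pl_def Theta_lt)
  qed
  have gen: "pl p ` B \<in> golay" if "B \<in> golay_gens" for B
  proof -
    from that obtain k where k: "k < 12" "B = setw (gl ! k)"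
      unfolding golay_gens_eq using gl_length by (auto simp: in_set_conv_nth)
    have lcs: "length cs = 12" using la gl_length by (simp add: list_all2_lengthD)
    have ck: "list_all (\<lambda>k. k < 12) (cs ! k)" "map (nth (cwd (cs ! k))) p = gl ! k"
      using la k lcs by (auto simp: list_all2_conv_all_nth)
    have lw: "length (cwd (cs ! k)) = 24" using cwd_len ck by simp
    have "pl p ` setw (gl ! k) = setw (cwd (cs ! k))"
    proof (rule perm_image_eq[OF perm])
      show "setw (gl ! k) \<subseteq> Theta" using setw_sub gl_nth_len k by (metis Theta_def)
      show "setw (cwd (cs ! k)) \<subseteq> Theta" using setw_sub lw by (metis Theta_def)
      fix x assume x: "x \<in> Theta"
      then have "x < 24" by (simp add: Theta_lt)
      moreover have "p ! x < 24" using lt len \<open>x < 24\<close> by auto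
      ultimately show "x \<in> setw (gl ! k) \<longleftrightarrow> pl p x \<in> setw (cwd (cs ! k))"
        using ck(2)[symmetric] gl_nth_len[OF k(1)] lw len by (auto simp: mem_setw pl_def)
    qed
    then show ?thesis using k cwd_golay ck by simp
  qed
  have "pl p ` C \<in> golay" if "C \<in> golay" for C
    using that
  proof (induction C rule: golay.induct)
    case zero then show ?case by (simp add: golay.zero)
  next
    case (add B X)
    have "pl p ` ((B - X) \<union> (X - B)) = (pl p ` B - pl p ` X) \<union> (pl p ` X - pl p ` B)"
      using perm_image_symdiff permutes_inj[OF perm] by blast
    then show ?case using golay_symdiff gen add by metis
  qed
  then show ?thesis using perm by (simp add: M24_def)
qed

lemma M24_id: "id \<in> M24" by (simp add: M24_def)

lemma M24_comp: "p \<in> M24 \<Longrightarrow> q \<in> M24 \<Longrightarrow> p \<circ> q \<in> M24"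
proof -
  assume p: "p \<in> M24" and q: "q \<in> M24"
  have "(p \<circ> q) ` C \<in> golay" if "C \<in> golay" for C
  proof -
    have "(p \<circ> q) ` C = p ` (q ` C)" by (rule image_comp[symmetric])
    then show ?thesis using p q that by (simp add: M24_def)
  qed
  then show ?thesis using p q by (simp add: M24_def permutes_compose)
qed

lemma M24_inv: assumes p: "p \<in> M24" shows "inv p \<in> M24"
proof -
  have perm: "p permutes Theta" using p by (simp add: M24_def)
  have inj: "inj p" using permutes_inj[OF perm] .
  have "(\<lambda>C. p ` C) ` golay \<subseteq> golay" using p by (auto simp: M24_def)
  moreover have "inj_on (\<lambda>C. p ` C) golay" using inj by (simp add: inj_on_def inj_image_eq_iff)
  ultimately have eq: "(\<lambda>C. p ` C) ` golay = golay" using endo_inj_surj finite_golay by blast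
  have "inv p ` C \<in> golay" if "C \<in> golay" for C
  proof -
    from that eq obtain D where D: "D \<in> golay" "C = p ` D" by blast
    then have "inv p ` C = D" using inj by (simp add: image_inv_f_f)
    then show ?thesis using D by simp
  qed
  then show ?thesis using permutes_inv[OF perm] by (simp add: M24_def)
qed

lemma M24_inv_apply1: "p \<in> M24 \<Longrightarrow> inv p (p x) = x"
  by (rule permutes_inverses(2)[OF M24_perm])
lemma M24_inv_apply2: "p \<in> M24 \<Longrightarrow> p (inv p x) = x"
  by (rule permutes_inverses(1)[OF M24_perm])

lemma M24_inj: "p \<in> M24 \<Longrightarrow> inj p" by (rule permutes_inj[OF M24_perm])

lemma M24_Theta: "p \<in> M24 \<Longrightarrow> p x \<in> Theta \<longleftrightarrow> x \<in> Theta"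
  by (rule permutes_in_image[OF M24_perm])

lemma octad_fix:
  assumes g: "g \<in> M24" and C: "C \<in> golay" "card C = 8" and A: "A \<subseteq> C" "5 \<le> card A"
    and fx: "\<And>x. x \<in> A \<Longrightarrow> g x = x"
  shows "g ` C = C"
proof (rule ccontr)
  assume ne: "g ` C \<noteq> C"
  have fC: "finite C" using C card.infinite by force
  have D: "g ` C \<in> golay" using M24_golay g C by blast
  have cD: "card (g ` C) = 8" using C card_image M24_inj g by (metis inj_on_subset subset_UNIV)
  have AD: "A \<subseteq> g ` C" using A fx by (metis image_eqI subset_iff)
  let ?E = "(C - g ` C) \<union> (g ` C - C)"
  have E: "?E \<in> golay" using golay_symdiff C D by blast
  have "?E \<noteq> {}" using ne by blast
  then have "8 \<le> card ?E" using min_weight E by blast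
  moreover have "?E \<subseteq> (C - A) \<union> (g ` C - A)" using A AD by blast
  moreover have "card (C - A) \<le> 3" using A C fC by (simp add: card_Diff_subset finite_subset)
  moreover have "card (g ` C - A) \<le> 3" using AD cD A fC
    by (simp add: card_Diff_subset finite_subset)
  moreover have "card ((C - A) \<union> (g ` C - A)) \<le> card (C - A) + card (g ` C - A)" by (rule card_Un_le)
  moreover have "card ?E \<le> card ((C - A) \<union> (g ` C - A))"
    by (rule card_mono) (use fC calculation(2) in auto)
  ultimately show False by linarith
qed

lemma fix_step:
  assumes g: "inj g" and C1: "g ` C1 = C1" and C2: "g ` C2 = C2" and y: "y \<in> C1 \<inter> C2"
    and sub: "C1 \<inter> C2 \<subseteq> insert y A" and fx: "\<forall>x\<in>A. g x = x"
  shows "g y = y"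
proof -
  have "g y \<in> C1 \<inter> C2" using C1 C2 y by blast
  then have "g y \<in> insert y A" using sub by blast
  then show ?thesis
  proof
    assume "g y \<in> A" then have "g (g y) = g y" using fx by blast
    then show ?thesis using g by (simp add: inj_eq)
  qed
qed

definition TL :: "(nat list \<times> nat list list) list list" where "TL = [[([3,4,5,7,15,16,11,13,21,9,6,17,10,20,23,12,22,19,18,8,14,1,0,2], [[2,3,4,6],[2,6],[2,4,5,10],[2,4,10],[2,4,6,7,8,9,10],[2,4,6,7,8,9,10,11],[2,4,6,7,8,11],[2,4,7,9],[2,4,6,7,10],[2,4,7,8,9],[1,2,3,4,7,8,9,10,11],[0,1,3,4,5,6,7,8,10,11]]), ([3,4,5,7,8,16,20,22,6,18,21,14,12,11,23,10,13,19,9,15,17,0,1,2], [[2,3,4,10],[2,6,10,11],[2,4,5,6,10,11],[2,4,6,8,9,10,11],[2,4,6,7,10],[2,4,7,11],[2,4,6,7,8,10],[2,4,7,9,10,11],[2,4,6,7,8,9,10],[2,4,7],[0,4,5,7,8,9,10],[0,1,3,4,5,6,7,8]]), ([3,4,5,7,13,20,16,6,22,19,15,23,10,11,14,12,8,18,9,21,17,0,2,1], [[1,6,7,8,9],[1,3,4,6,7,8,9],[1,3,5,7,8,9,10,11],[1,3,7,8,10,11],[1,3,6,9,10,11],[1,3,9],[1,3,6,8,9,10,11],[1,3,8],[1,3,6,11],[1,3,6,9,10],[0,1,2,3,5,6],[0,1,3,4,5,6,7]]), ([2,4,5,7,11,22,19,18,20,16,15,23,12,13,17,10,8,6,21,9,14,0,3,1],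 [[1,2,3,4,5,6,9,10,11],[1,3,4,7,9,10,11],[1,3,5,6,7,9],[1,3,6,7,10,11],[1,3,6,9],[1,3,6,8,9,10,11],[1,3,9],[1,3,8,9,10],[1,3,6,10],[1,3,6],[0,1,2,3,5,6],[0,1,2]]), ([2,3,5,7,11,15,23,14,20,16,22,19,10,8,9,12,13,21,6,17,18,0,4,1], [[1,2,3,4,5,6,9,10,11],[1,5,6,7,8],[1,3,5,6,7,8,9],[1,3,6,7,8,9],[1,3,6,10,11],[1,3,6,9,10,11],[1,3,6,9,11],[1,3,9,10],[1,3,10,11],[1,3,6,8],[0,1,2,3,5,6,8,9,10,11],[0,1,2,3,4,5,9,10]]), ([2,3,4,14,8,22,12,7,20,6,15,9,17,11,19,23,13,21,16,10,18,0,5,1], [[1,2,3,7,8,9,10,11],[1,5,6,7,8,9,10,11],[1,3,4,7,8,9],[1,3,7,8,10,11],[1,3,9],[1,3,7,8,9,10,11],[1,3,6,10],[1,3,7,8,9,10],[1,3,6,9],[1,3,8],[0,1,2,3,5,6,8],[0,1,2,3,6,7,8,9,10]]), ([2,3,4,9,18,17,12,7,19,5,13,14,22,23,20,11,15,16,21,10,8,0,6,1], [[1,2,3,7],[1,5,6,7,8,9,10,11],[1,3,4,7,9,10,11],[1,3,5,6,9],[1,3,5,6,7,9],[1,3,5,6],[1,3,6,9,10,11],[1,3,5,6,11],[1,3,6,9,11],[1,3,5,6,7,8,9],[0,1,2,3,5,6,10,11],[0,1,2,3,5]]), ([2,3,5,4,9,8,23,14,18,19,6,16,12,15,11,10,21,13,22,17,20,0,7,1],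 [[1,2,3,4,5],[1,4,5],[1,3,5,6,7],[1,3,4,8],[1,3,8],[1,3,9,10],[1,3,8,9,10],[1,3,6,9,10,11],[1,3,8,9,10,11],[1,3,6,9],[0,1,2,3,5,10],[0,1,2,3,5,6,7,8,9,10]]), ([2,3,4,15,11,23,7,10,21,17,9,14,19,5,6,16,13,18,22,12,20,0,8,1], [[1,2,3],[1,5,6,7,8],[1,3,4,5,9,10],[1,3,5,7,8,9,10],[1,3,7,8,9,10],[1,3,6],[1,3,6,7,9,10],[1,3,5,6,7,9,10,11],[1,3,5,7,8,11],[1,3,5,7,8,9],[0,1,2,3,5,9],[0,1,2,3,6,7]]), ([2,3,4,6,20,23,12,7,8,14,21,5,11,17,18,22,16,15,13,10,19,0,9,1], [[1,2,3,5,10],[1],[1,3,4,7,8,9],[1,3,7],[1,3,6,8,9,11],[1,3,5,6,11],[1,3,5,6,7,8,9,10],[1,3,5,6],[1,3,6,8,9,10],[1,3,5,6,7,9,10,11],[0,1,2,3,5,6,8,11],[0,1,2,3,6,7,8,9,10,11]]), ([2,3,5,4,19,13,17,23,9,18,16,21,7,20,8,12,6,11,15,14,22,0,10,1], [[1,2,3,4,5,6,9,10],[1,4,5,7,8,9,10],[1,3,5,6,9],[1,3,4,8,9],[1,3,6,8],[1,3,8,9,10],[1,3,7,8,9,10],[1,3,6,7,10],[1,3,6,7,8,9],[1,3,6,8,9,11],[0,1,2,3,5,7,8,9,10,11],[0,1,2,3,5,10]]), ([2,3,4,6,8,18,7,10,14,20,16,21,22,13,15,9,5,23,19,12,17,0,11,1],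 [[1,2,3,8,9,10],[1,5,7,11],[1,3,4,7,8,9,10,11],[1,3,8,9],[1,3,6,7,8,9],[1,3,5,6,7,10],[1,3,5,6,11],[1,3,6,9,11],[1,3,6,9,10,11],[1,3,6,10],[0,1,2,3,6,7,8,9,10,11],[0,1,2,3,6,7,8,9,10]]), ([2,3,5,4,18,11,14,17,19,9,21,6,10,22,13,7,16,8,20,23,15,0,12,1], [[1,2,3,4,5,8,9,10],[1,4,5,6],[1,3,5,6,7,9,10,11],[1,3,4,9,10,11],[1,3,6,7,9,10],[1,3,7,8,9,10],[1,3,9,10],[1,3,10,11],[1,3,6,9,11],[1,3,7,8,9,10,11],[0,1,2,3,5,6,7,8,9,10],[0,1,2,3,5,7,8,9,10,11]]), ([2,3,4,18,5,6,7,10,19,9,17,22,21,11,23,20,8,15,14,12,16,0,13,1], [[1,2,3,5,6,7,8,9,10,11],[1,5,7,11],[1,3,4,5,9,10],[1,3,8],[1,3,5,6,9],[1,3,10,11],[1,3,6,7,8,11],[1,3,6,11],[1,3,6,9,10],[1,3,6,10,11],[0,1,2,3,5,6,10],[0,1,2,3,5,6,10,11]]), ([2,3,4,5,19,11,12,7,18,9,16,6,23,22,8,17,21,13,15,10,20,0,14,1], [[1,2,3,6,7,8],[1],[1,3,4,7,9,10,11],[1,3,5,6,8,9,10,11],[1,3,6,8],[1,3,7,8,9,10],[1,3,8,9,10],[1,3,7,8,9,10,11],[1,3,6,8,9,10,11],[1,3,10,11],[0,1,2,3,5,6,10],[0,1,2,3,5,11]]), ([2,3,4,8,6,5,7,10,20,14,22,17,16,23,11,19,18,13,9,12,21,0,15,1],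 [[1,2,3,5,6,7,8,9,10,11],[1,6],[1,3,4,6,7,8,9],[1,3,5,6,7,8,9],[1,3,7,8,10,11],[1,3,5,6,7,9,10,11],[1,3,6,7,10,11],[1,3,6],[1,3,6,10,11],[1,3,6,9,10],[0,1,2,3,5,6,8,11],[0,1,2,3,5,6,8]]), ([2,3,4,8,20,11,10,12,14,6,18,22,19,9,13,15,17,5,21,7,23,0,16,1], [[1,2,3,7,10,11],[1,5,6,9,10,11],[1,3,4,9],[1,3],[1,3,8,9],[1,3,8,9,10,11],[1,3,5,6,7,9,10,11],[1,3,5,7,8,11],[1,3,6,7,9,10],[1,3,7,8,9,10,11],[0,1,2,3,5,6,8],[0,1,2,3,6,7,8,9,10,11]]), ([2,3,4,5,9,13,10,12,19,18,6,21,14,20,11,23,16,8,22,7,15,0,17,1], [[1,2,3,6,7,8,9,10],[1,6,7,8,9,10],[1,3,4,9],[1,3,5,6,7,9],[1,3,8],[1,3,8,9,10],[1,3,9,10],[1,3,6,8,9,11],[1,3,7,8,10,11],[1,3,6,7,10],[0,1,2,3,5],[0,1,2,3,5,6,10]]), ([2,3,4,13,23,11,7,10,16,22,14,9,20,6,5,21,15,8,17,12,19,0,18,1], [[1,2,3],[1,5,6,7,8,9],[1,3,4,6,7,8,9],[1,3,5,7,8,9,10,11],[1,3,5,6,11],[1,3,6,11],[1,3,6,7,8,9],[1,3,10,11],[1,3,5,7,8,9],[1,3,5,7,8,11],[0,1,2,3,6,7,8,10],[0,1,2,3,5,8,9,10]]), ([2,3,4,8,14,13,12,7,6,20,17,18,15,21,5,16,22,11,23,10,9,0,19,1],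 [[1,2,3,7],[1,5,6,7],[1,3,4,6,7,8,9,10],[1,3,5,10],[1,3,5,7,8,9],[1,3,6,7,10,11],[1,3,8,9,10,11],[1,3,6,7,10],[1,3,5,7,8,9,10],[1,3,5,6,7,10],[0,1,2,3,6,7,8,9,10,11],[0,1,2,3,5,6,8,11]]), ([2,3,4,13,16,5,10,12,22,23,15,14,21,17,8,18,9,11,19,7,6,0,20,1], [[1,2,3,5],[1,6,7,8,9,10],[1,3,4,11],[1,3,5,6,7,8,9,10,11],[1,3,6,8,9,10,11],[1,3,5,6,7],[1,3,6,11],[1,3,6,9,10],[1,3,6,7,8,11],[1,3,7],[0,1,2,3,5,8,9,10],[0,1,2,3,5,6,8,9]]), ([2,3,4,13,22,8,12,7,23,16,9,15,18,19,11,20,14,5,6,10,17,0,21,1], [[1,2,3,7,8,9,10,11],[1,5,6,7],[1,3,4,7,9,10,11],[1,3,6,7,8],[1,3,6,10,11],[1,3,6,7,8,9],[1,3,5,6,7],[1,3,5,8],[1,3,8],[1,3,6,9],[0,1,2,3,5,6,8,9],[0,1,2,3,6,7,8,10]]), ([0,1,2,3,4,5,6,7,8,9,10,11,12,13,14,15,16,17,18,19,20,21,22,23], [[0],[1],[2],[3],[4],[5],[6],[7],[8],[9],[10],[11]]), ([2,3,4,5,18,8,7,10,9,19,21,16,17,15,13,14,6,11,20,12,22,0,23,1], [[1,2,3,8,9,10],[1,6],[1,3,4,7],[1,3,5,6,7,8],[1,3,6,7,9,10],[1,3,9,10],[1,3,7,8,9,10],[1,3,6,9],[1,3,6,10],[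1,3,6,9,10,11],[0,1,2,3,5,11],[0,1,2,3,5]])],
  [([2,3,4,6,14,15,10,12,20,8,5,16,9,19,23,11,21,18,17,7,13,0,22,1], [[1,2,3,5],[1,5],[1,3,4,9],[1,3,9],[1,3,5,6,7,8,9],[1,3,5,6,7,8,9,10],[1,3,5,6,7,10],[1,3,6,8],[1,3,5,6,9],[1,3,6,7,8],[0,1,2,3,6,7,8,9,10],[0,1,2,3,5,6,8,11]]), ([2,3,4,6,20,19,10,7,14,8,21,16,11,15,13,9,5,17,18,12,23,1,22,0], [[0,5,6,7,8,10],[0,2,3,6,7,8],[0,2,4,5,6,7,8,9],[0,2,5,6,7,8],[0,2,5,10],[0,2,9,10],[0,2,7,8,9,10],[0,2,5,7],[0,2,5,8,9,10],[0,2,5],[0,1,2,3,6,7,8,9,10],[0,1,2,3,6,7,8,9,10,11]]), ([1,3,4,6,8,21,12,7,14,20,19,13,9,18,16,11,17,5,15,10,23,2,22,0], [[0,1,2,3,4,5,9,10],[0,2,3,6,7,8,9,10],[0,2,4,5,6,7],[0,2,5,6,7,10],[0,2,5,9],[0,2,5,7,8,10],[0,2,7,8],[0,2,8,9],[0,2,5,8],[0,2,5,8,9],[0,4,5,7,8],[0,4,8,9,10,11]]), ([1,2,4,6,16,14,7,12,21,5,19,17,11,23,8,9,13,20,15,10,18,3,22,0], [[0,1,2,3,4,5,7,8],[0,4,5,6],[0,2,4,5,6,7,8,9,10],[0,2,6,7,8,9,10],[0,2,9,10],[0,2,7,8],[0,2,5,7,8,10],[0,2,7,8,9],[0,2,5,9,10],[0,2,7],[0,2,3,8],[0,2,3,10,11]]),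 ([1,2,3,13,9,21,10,12,14,15,19,17,23,11,18,16,6,20,5,7,8,4,22,0], [[0,1,2,6,9,10],[0,4,5,7,8,9,10],[0,2,3],[0,2,5,8,9,10],[0,2,5,8],[0,2,5,6,9,10],[0,2,5,6,9],[0,2,7,8,9],[0,2,8],[0,2,5,7],[0,2,4,5,8],[0,2,4,5,10,11]]), ([1,2,3,8,9,16,23,14,12,20,18,7,10,11,19,21,6,15,4,17,13,5,22,0], [[0,1,2,6,7],[0,4,5],[0,2,3],[0,2,5,9],[0,2,5,8,10],[0,2,5,6,7,10],[0,2,5,6,7],[0,2,4,5,6,7,8,9],[0,2,4,5,6,8],[0,2,5,7,8,10],[0,2,6,7,9,10],[0,2,6,11]]), ([1,2,4,3,16,7,14,20,5,21,17,19,9,23,10,11,13,12,18,8,15,6,22,0], [[0,1,2,3,4,5,7,8],[0,3,4,9],[0,2,4,6,7,8,9],[0,2,3,5,10],[0,2,7,8,9,10],[0,2,5,7,8,10],[0,2,7,8],[0,2,5,8,10],[0,2,7],[0,2,5,9,10],[0,2,5,6],[0,2,5,6,9,10,11]]), ([1,2,3,14,11,23,4,12,8,21,20,19,15,6,5,18,9,17,16,10,13,7,22,0], [[0,1,2,4,9],[0,5,6,7,8],[0,2,3,4],[0,2,6,7,8,9,10],[0,2,4,6,7,10],[0,2,5,8,10],[0,2,4,5,6,9],[0,2,5,6,9,10],[0,2,6,7,8,9],[0,2,6,7,9,10],[0,2,8,9],[0,2,5,6,7,9,10,11]]), ([1,2,3,5,9,23,16,15,20,12,7,18,21,11,17,10,6,14,13,19,4,8,22,0],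 [[0,1,2,6,7],[0,4,8,9,10],[0,2,3,10],[0,2,7,8,9],[0,2,5,7,8,9],[0,2,5,6,7],[0,2,5,6,7,10],[0,2,5,8,9,10],[0,2,5,7,8,10],[0,2,4,5,6,8],[0,2,4,5,7,8,9,10],[0,2,5,6,8,9,10,11]]), ([1,2,4,3,13,12,19,5,15,14,8,21,11,16,7,6,23,10,17,18,20,9,22,0], [[0,1,2,3,4,5,9,10],[0,3,4,5,9,10],[0,2,4,6,7,8],[0,2,3,5],[0,2,5,6,7,8],[0,2,6,7,8,9,10],[0,2,5,9,10],[0,2,7,8,9,10],[0,2,5,7],[0,2,5,6,7,10],[0,2,5,6,7,8,9],[0,2,5,6,11]]), ([1,2,3,5,11,17,12,4,15,18,13,16,8,6,14,21,9,23,19,7,20,10,22,0], [[0,1,2,6],[0,6],[0,2,3,4],[0,2,4,7],[0,2,5,8,9,10],[0,2,4,5,6,8,9,10],[0,2,5],[0,2,4,5,8],[0,2,5,6,7,8],[0,2,5,6,7,10],[0,2,5,10],[0,2,5,6,11]]), ([1,2,4,3,23,10,21,15,20,19,18,14,6,13,12,9,16,7,8,17,5,11,22,0], [[0,1,2,3,4,5,8,9,10],[0,3,4,6,7,8,9,10],[0,2,4,5,10],[0,2,3,9],[0,2,5,8,10],[0,2,5,8],[0,2,5,6,7,10],[0,2,5,6,7,8],[0,2,5,6,8,9],[0,2,7,8],[0,2,6,7],[0,2,5,7,8,9,10,11]]), ([1,2,3,17,11,5,10,7,16,13,18,15,19,6,23,20,9,14,8,4,21,12,22,0], [[0,1,2,5,6,7],[0,4,7,8],[0,2,3,6,7,8],[0,2,6],[0,2,5,8,9],[0,2,8,9],[0,2,5,8],[0,2,5,6,7,8],[0,2,4,5,8],[0,2,4,5,10],[0,2,5,8,10],[0,2,5,6,10,11]]),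 ([1,2,3,4,9,10,21,20,15,14,17,19,16,11,7,23,6,12,8,18,5,13,22,0], [[0,1,2,6,9,10],[0,5,6,7,8,10],[0,2,3,10],[0,2,4,5,6,7,8,9],[0,2,5,7,8,9,10],[0,2,5,6,9],[0,2,5,6,9,10],[0,2,5,9],[0,2,5,7],[0,2,8],[0,2,6],[0,2,5,6,9,10,11]]), ([1,2,3,7,11,4,23,17,21,8,19,20,18,6,10,15,9,12,13,5,16,14,22,0], [[0,1,2,4,9],[0,5,6,8,9],[0,2,3,6,8,9,10],[0,2,4,5,7,8,9,10],[0,2,5,9,10],[0,2,4,5,6,9],[0,2,5,8,10],[0,2,5,6,8,9],[0,2,6,7,9,10],[0,2,6,7,8,9],[0,2,5,8],[0,2,5,6,10,11]]), ([1,2,3,7,6,10,8,16,17,20,13,23,14,9,12,18,11,4,5,19,21,15,22,0], [[0,1,2],[0,4,5],[0,2,3,6],[0,2,5,7,8,9],[0,2,5,6,8,9],[0,2,5,8,9],[0,2,4,5,6],[0,2,4,6,7,8,9],[0,2,7,8],[0,2,5,8,10],[0,2,5,8,9,10],[0,2,4,5,6,8,9,10,11]]), ([1,2,3,4,6,12,19,15,5,21,18,14,23,9,10,13,11,7,17,8,20,16,22,0], [[0,1,2,8],[0,5,6,7,8],[0,2,3,5,6,7,8],[0,2,4,6,7,8,9,10],[0,2,6,7,9,10],[0,2,5,8,9,10],[0,2,8],[0,2,5,7,8,9,10],[0,2,7],[0,2,5,10],[0,2,5,8,9],[0,2,5,7,8,9,10,11]]), ([1,2,3,12,11,10,5,14,13,16,15,18,20,6,4,19,9,7,21,23,8,17,22,0],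 [[0,1,2,5,6,7],[0,4,8,9],[0,2,3,5,6,7,8,9],[0,2,4,5],[0,2,4,6,7,8],[0,2,5,8],[0,2,8,9],[0,2,5,6,7,10],[0,2,4,5,10],[0,2,4,5,8],[0,2,4,5,6,9],[0,2,5,6,7,9,10,11]]), ([1,2,3,7,9,12,20,21,16,23,5,8,15,11,4,14,6,10,19,13,17,18,22,0], [[0,1,2,5,6,7,8,9],[0,4,5,10],[0,2,3,10],[0,2,4,5,6,7,8,9,10],[0,2,4,6,7,8,9],[0,2,6,7,8,9,10],[0,2,6,7,8,9],[0,2,5,9,10],[0,2,4,6,7,8],[0,2,4,5,6],[0,2,4,7],[0,2,5,6,8,9,10,11]]), ([1,2,3,12,6,4,16,8,14,18,21,5,17,9,7,20,11,10,23,15,13,19,22,0], [[0,1,2,4,5,6,7,8,9,10],[0,6],[0,2,3,6],[0,2,4,5,6,7],[0,2,5,6,7,10],[0,2,4,6,7,10],[0,2,7,8,9,10],[0,2,7],[0,2,5,7,8,9,10],[0,2,8,9],[0,2,5,7,8,10],[0,2,7,8,10,11]]), ([1,2,3,12,9,7,18,13,8,5,23,16,19,11,10,17,6,4,15,21,14,20,22,0], [[0,1,2,6,7],[0,4,5,8],[0,2,3,8],[0,2],[0,2,7],[0,2,6],[0,2,4,5,8],[0,2,4,6,7,8],[0,2,5,9,10],[0,2,7,8,9,10],[0,2,5,6,9],[0,2,4,5,10,11]]), ([0,1,2,3,4,5,6,7,8,9,10,11,12,13,14,15,16,17,18,19,20,21,22,23], [[0],[1],[2],[3],[4],[5],[6],[7],[8],[9],[10],[11]]),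 ([1,2,3,4,11,7,14,5,20,19,8,21,13,6,12,16,9,10,18,17,15,23,22,0], [[0,1,2,6,7,8,9,10],[0,6,7,8,9,10],[0,2,3,5,6,7,8,9],[0,2,4,9],[0,2,5,9],[0,2,9,10],[0,2,5,10],[0,2,6,7,9,10],[0,2,5,6,8,9],[0,2,5,6,9,10],[0,2,5],[0,2,5,6,11]])],
  [([1,2,3,5,6,14,18,20,4,16,19,12,10,9,23,8,11,17,7,13,15,21,22,0], [[0,1,2,8],[0,4,8,9],[0,2,3,4,8,9],[0,2,4,6,7,8,9],[0,2,4,5,8],[0,2,5,9],[0,2,4,5,6,8],[0,2,5,7,8,9],[0,2,4,5,6,7,8],[0,2,5],[0,2,5,9,10],[0,2,5,11]]), ([0,2,3,5,6,17,20,18,16,4,7,15,8,11,23,10,9,14,19,13,12,21,22,1], [[0,1,2,7,8,9],[1,2,3,4,5,6,8,9],[1,5,8,9],[1,3,4,5,7],[1,3,4,6,7,8,9],[1,3,4,7],[1,3,6,7,8,9],[1,3,4,8],[1,3,6,7,8],[1,3,4],[1,3,6,7,8,9,10],[1,3,6,11]]), ([0,1,3,5,11,23,13,18,12,19,15,7,10,6,17,8,9,14,4,20,16,21,22,2], [[0,3,4],[1,2,3,4,5,6,7],[2,3,4,5,6,7],[2,4,5,6,8],[2,4,7,8],[2,4,8],[2,4],[2,8],[2,7,8,9],[2,4,6,9],[2,4,7,8,9,10],[2,4,6,11]]), ([0,1,2,12,11,10,20,18,5,19,8,17,23,9,7,15,6,4,14,13,16,21,22,3], [[0,3,4,7,8,9],[1,5,6,8,9],[2,3,4,8,9],[3,8],[3,9],[3,5,6,8],[3,4,7,8,9],[3,4,5,6,8],[3],[3,5,7,8],[3,5,6,7,8,9,10],[3,4,5,11]]),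 ([0,1,2,7,13,10,15,17,5,14,8,18,9,23,12,20,16,3,19,11,6,21,22,4], [[0,5,6,7],[1,3,4,7],[2,5,6],[4,5,6],[4,5,6,7,8,9],[4,6,8,9],[3,4,6,7],[3,4,5,6,8],[4,5,6,7,8],[4,8,9],[4,10],[3,4,5,6,8,9,11]]), ([0,1,3,2,19,23,6,16,12,11,15,9,8,13,14,10,7,17,20,4,18,21,22,5], [[0,2,3,5,6,7,8],[1,2,3,4,5],[3,6,7,8],[2,4,5],[5,6,7,8],[5],[5,6],[5,7,8,9],[4,5,6,7,8,9],[4,5,6,7],[5,8,9,10],[5,11]]), ([0,1,2,13,11,5,23,19,8,16,10,4,14,3,12,17,9,15,20,7,18,21,22,6], [[0],[1,3,4,5,6,7,8],[2,3,4,5,6,7,8],[3,6,7,8],[6],[4,5,7,8],[4],[3,4,5,9],[3,5,6,7,8,9],[3,4,5,7],[6,8,9,10],[3,4,5,11]]), ([0,1,2,4,14,10,23,6,5,13,8,16,20,15,3,9,18,12,11,19,17,21,22,7], [[0,4,5],[1,3,4,6,7,8,9],[2,4,5,6,7,8,9],[3,4],[3],[6,7],[5,8,9],[6,7,8,9],[3,9],[3,5,7,8],[3,5,7,10],[7,11]]), ([0,1,3,2,4,15,11,7,23,9,12,6,10,18,19,5,17,16,13,14,20,21,22,8], [[0,2,3,4],[1,2,3,4],[3,4,5,6,7],[2,4,8],[4,5,6,7,8],[5,6],[6],[6,7],[8],[5,6,7,9],[5,7,8,10],[5,6,7,11]]), ([0,1,2,4,3,5,16,12,8,23,10,13,7,11,19,20,6,18,17,14,15,21,22,9],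 [[0,3,4,5],[1,3,4,5],[2,3,4,5],[4,5,6,7,8],[3,5,9],[5,6,7,8,9],[6,7],[7],[7,8],[9],[6,7,8,10],[6,8,9,11]]), ([0,1,3,2,14,12,9,17,15,6,23,11,5,20,4,8,16,7,18,19,13,21,22,10], [[0,2,3],[1,2,3,4,5,6],[3,7,8,9],[2,7,8,9],[4],[6],[5],[5,6,8,9],[4,5,6,7,9],[4,9],[4,5,6,7,8,9,10],[7,8,9,11]]), ([0,1,2,16,6,5,4,17,8,13,10,23,18,9,20,19,3,7,12,15,14,21,22,11], [[0],[1,3,4,5,7],[2,7],[5,7,8,9],[4,9],[3,7,8],[3,4,5,6,7],[7],[8,9],[9],[3,5,8,10],[3,5,7,8,11]]), ([0,1,2,3,19,10,9,16,5,11,8,6,15,20,4,23,17,7,13,14,18,21,22,12], [[0,4,5,6,7,8],[1,5],[2,4,5,9],[3,4,6,7,8,9],[4,5,6,7,8],[6],[5,6],[6,7,8,9],[4,5,6,7,8,9],[4,8,9],[4,6,8,9,10],[6,7,8,9,11]]), ([0,1,2,6,16,5,3,18,8,11,10,9,17,23,15,14,4,12,7,20,19,21,22,13], [[0,3,4,5],[1,7],[2,3,4,5,7],[5,6,7],[3,5],[4,5,6,7],[3,4,5,6],[7],[7,8,9],[9],[4,6,9,10],[4,6,11]]), ([0,1,2,6,15,8,9,12,10,3,5,11,13,7,20,17,18,4,19,16,23,21,22,14], [[0,4],[1,3],[2,4],[3,5,6,7,8,9],[3,7,8,9],[3,7],[4,5,6,7],[3,4,5,6,7,8],[5,9],[3,5,7,8,9],[5,7,10],[4,6,7,11]]),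 ([0,1,2,3,14,8,11,17,10,6,5,9,23,18,19,12,7,16,20,4,13,21,22,15], [[0,4],[1,5,6],[2,4,7],[3,5,6,8],[5,6,7,8],[5,6],[5],[6,8,9],[4,5,6,7,9],[4,8],[5,9,10],[7,11]]), ([0,1,2,11,13,5,9,14,8,6,10,3,19,4,7,18,23,20,15,12,17,21,22,16], [[0,3,4,5],[1,6,7,8],[2,6,7,8],[4,5],[6,7],[3,6,7],[3,5,9],[3,4,5,9],[4,6,7,8],[3,4,5,7],[7,9,10],[3,4,5,6,8,9,11]]), ([0,1,2,6,20,10,11,4,5,9,8,3,14,19,16,13,12,18,23,15,7,21,22,17], [[0,3,4,7,8,9],[1,4,5,6],[2,5,6,9],[4,5,7,8],[5,7,8,9],[3,4,5,6],[3,7],[3,4,5,6,8],[5,7,8],[3,5,7,8],[7,8,9,10],[3,5,8,11]]), ([0,1,2,11,7,8,3,20,10,9,5,6,16,15,12,19,14,23,17,13,4,21,22,18], [[0,3,4,5,6,7],[1,5,8,9],[2,3,4,5,8,9],[8,9],[3,8],[5,6,7,9],[3,6,7],[6,8,9],[5,7],[4,8],[4,5,6,7,9,10],[6,8,11]]), ([0,1,2,11,12,10,6,23,5,3,8,9,18,17,13,16,20,14,4,7,15,21,22,19], [[0,4,5,6,7,8],[1,3,8],[2,4,5,6,8],[3,7,8],[3,6,7,8],[3,5,9],[5,6,7,9],[3,4,5,6,8],[4,5,6,8],[3,5,7,8],[8,10],[9,11]]), ([0,1,2,4,19,8,13,18,10,16,5,23,9,17,14,7,12,6,15,3,11,21,22,20],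 [[0,4,9],[1,3,4,8,9],[2,4,7,9],[4,6,8,9],[5,9],[5,8,9],[5,6,7,8,9],[6,8,9],[3,7,8,9],[3,5,7,8,9],[5,10],[6,7,8,9,11]]), ([0,1,2,3,4,5,6,7,8,9,10,11,12,13,14,15,16,17,18,19,20,21,22,23], [[0],[1],[2],[3],[4],[5],[6],[7],[8],[9],[10],[11]])],
  [([0,1,2,3,4,5,6,7,8,9,10,11,12,13,14,15,16,17,18,19,20,21,22,23], [[0],[1],[2],[3],[4],[5],[6],[7],[8],[9],[10],[11]]), ([1,0,2,3,16,5,6,19,10,11,8,9,15,13,17,12,4,14,20,7,18,21,22,23], [[1,2,3,4,5],[0,2,3,5,6,7,8],[2,4,6,7,8],[3,7,8],[6],[4,5,6,7,8],[4],[9],[7,8,9],[7],[4,6,8,9,10],[4,6,11]]), ([2,0,1,11,16,8,6,7,10,3,5,9,20,4,18,14,13,12,15,19,17,21,22,23], [[1,2,3,4,5],[0,2,5,6,7,8,9],[1,3,4,6,7,8,9],[3,4,5,6,7],[3,6,7],[3],[5,6,7,8,9],[3,4,5,6,7,8,9],[4,5,6,7,9],[3,4,5,6,8],[5,7,10],[4,6,11]]), ([3,0,2,1,10,17,9,4,16,11,7,6,12,18,5,15,19,14,20,8,13,21,22,23], [[2,3,4,5,6],[0,1,2,3,4,5,6],[2,6,7],[1,3,4,5,7],[5],[4,7,8],[6,7,8],[4,8,9],[5,8,9],[5,6,7],[5,9,10],[6,8,11]]), ([4,0,1,5,2,7,14,18,20,12,9,11,19,16,8,17,13,15,3,10,6,21,22,23],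 [[1,2,3],[0,2,8],[1,2,3,4,6,7,9],[5,8,9],[2,4,7,8,9],[7],[9],[3,5,8],[3,5,9],[6],[6,9,10],[11]]), ([5,0,1,4,20,8,11,13,2,12,10,14,17,6,7,19,18,15,3,9,16,21,22,23], [[1,3,5,6,7,8,9],[0,2,4,5,6],[1,2,3,4,7,8,9],[2],[2,4,9],[8],[2,4,7],[3,5,6],[2,3,4,5,6],[6,7,8],[7,9,10],[6,8,11]]), ([6,0,1,9,20,17,2,19,14,3,13,11,16,18,4,10,5,12,15,7,8,21,22,23], [[1,2,3,4,7,8,9],[0,4,5,7,8],[1,2,3,4,6,7,9],[3,4,5,6,8],[2,3,5,6,7,8,9],[3,7,8],[2,4,5],[3,5,8],[4,6,7],[3,4,5,6,7],[4,5,6,7,8,9,10],[5,7,11]]), ([7,0,1,8,10,4,6,19,9,12,20,16,18,11,5,13,17,15,3,2,14,21,22,23], [[1,3,4,6,7,8,9],[0,2,4,5,8],[1,3,8],[4,5,6,7,8],[5,6,7,8,9],[4,6,9],[6,8,9],[3,5,8],[2,3,4,8,9],[2,4,5],[5,7,10],[11]]), ([8,0,1,7,9,5,16,17,10,12,2,6,13,14,4,18,19,15,3,20,11,21,22,23], [[1,2,3,4,5],[0,2,6],[1,3,6],[4,5,6],[2,6,7],[2,4,5,6,8],[2,4,6,7,8],[3,5,6],[2,3,5,6,7,8,9],[4,8,9],[2,6,7,9,10],[6,8,11]]), ([9,0,1,6,14,4,11,5,20,3,7,2,10,8,17,16,19,12,15,13,18,21,22,23], [[1,2,3],[0],[1,3,5,6,7,8,9],[3,4,7,8,9],[3,5,7,8,9],[2,3,6,7,8],[2,4,9],[2,3,4],[7,8,9],[2,3,4,5,7],[7,9,10],[2,4,7,8,11]]),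 ([10,0,1,6,17,8,4,18,5,15,2,19,16,11,13,9,7,3,12,14,20,21,22,23], [[1,2,3,7,8],[0,2,4,5,8],[1,3,4,5,7],[5,6,7],[2,5,6],[2,4,8],[2,3,6,7,8],[3,5,8],[2,4,5],[9],[2,4,10],[3,5,7,8,11]]), ([11,0,1,2,10,18,9,13,16,3,19,6,14,17,8,20,7,12,15,5,4,21,22,23], [[1,3,8],[0,4,5,6,7],[1,3,6],[2,3,4,5,7],[3,5,9],[3,5,6,7,9],[6,7,8],[3,5,6],[5,7,8],[3,4,7,8,9],[4,6,7,8,10],[6,7,8,9,11]]), ([12,0,2,1,5,18,17,13,4,20,6,19,15,9,8,3,7,11,14,10,16,21,22,23], [[2,4,5,6,8],[0,1,2,3,5,6,8],[2,5,6],[1,3,4,8,9],[3,4,7,8,9],[3,5,6,7,9],[4,7,8],[9],[4],[3,5,9],[3,5,6,7,8,9,10],[3,5,7,8,11]]), ([13,0,1,7,4,14,5,11,17,3,6,19,18,16,20,8,2,12,15,9,10,21,22,23], [[1,3,4,5,6,7,8],[0,2,8],[1,3,4,5,7],[3,5,7,8,9],[3,4,7,8,9],[2,3,4,5,6,7,8],[2,4,5,6,8],[3,5,8],[6,8,9],[3,5,9],[2,4,6,7,10],[2,4,7,8,11]]), ([14,0,1,2,8,17,18,4,13,15,6,7,20,9,5,11,19,3,12,10,16,21,22,23], [[1,3,7],[0,5,6,8,9],[1,3,4,8,9],[2,5,6],[5,6,7],[4,7,8],[3,5,6,7,9],[3,4,5,6,7,8,9],[5,6,7,8,9],[5],[5,6,7,8,10],[3,5,7,8,11]]),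 ([15,0,2,1,8,9,18,16,13,14,19,7,3,17,10,12,6,20,11,5,4,21,22,23], [[2,4,8],[0,1,2,6,7],[2,3,4,5,7],[1,3,6],[8],[6,7,8],[3,5,6,7,9],[3,5,7,8,9],[3,7,8],[4,5,6],[3,4,5,9,10],[6,7,8,9,11]]), ([16,0,1,6,13,11,8,20,18,12,19,7,9,4,14,10,2,15,3,17,5,21,22,23], [[1,3,6,7,8],[0,2,5,6,7,8,9],[1,3,4,8,9],[4,8,9],[8],[2,4,9],[2,4,8],[3,4,5,6,7,8,9],[3,4,5,6,8],[4,5,6],[2,4,5,9,10],[2,6,11]]), ([17,0,1,4,7,6,8,16,13,3,14,18,19,11,9,5,10,12,15,20,2,21,22,23], [[1,3,7],[0,2,4,5,8],[1,3,6,7,8],[3,4,5],[3],[3,6,7],[8],[3,5,8],[9],[2,3,4,8,9],[2,4,5,9,10],[5,7,11]]), ([18,0,1,7,20,16,14,10,11,15,19,2,8,5,9,13,6,3,12,4,17,21,22,23], [[1,2,3,4,6,7,9],[0,4,5],[1,3,5,6,7,8,9],[5],[9],[2,4,6,7,8],[2,3,4,5,6,7,8],[2,3,4],[4,5,6,7,8],[2,5,6],[6,9,10],[2,3,4,6,11]]), ([19,0,1,4,9,11,6,2,16,15,18,10,5,8,20,17,14,3,12,7,13,21,22,23], [[1,3,8],[0],[1,2,3,4,5],[2,6,7,8,9],[6,8,9],[2,4,7],[3,6,7],[2,3,4],[5,8,9],[7,8,9],[5,7,10],[3,5,11]]), ([20,0,1,2,5,9,17,16,4,12,7,19,11,18,10,14,6,15,3,8,13,21,22,23],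 [[1,3,5,6,9],[0,4,5,7,8],[1,3,4,5,7],[2,6,7],[4,5,6],[6,7,8],[4,7,8],[3,5,8],[3,4,5,6,7],[8],[6,7,8,9,10],[6,8,11]])],
  [([0,1,2,3,4,5,6,7,8,9,10,11,12,13,14,15,16,17,18,19,20,21,22,23], [[0],[1],[2],[3],[4],[5],[6],[7],[8],[9],[10],[11]]), ([0,2,1,11,13,8,6,19,5,9,10,3,14,4,12,20,16,18,17,7,15,21,22,23], [[0,1,2],[2,3,4,5,6,7,8],[1,3,4,5,6,7,8],[4,5,6,7,8],[5,6,7,8,9],[3,5,9],[3,6,7],[3,4,5,6,8],[4,5,6],[3,4,5,6,7,8,9],[10],[3,4,5,6,8,9,11]]), ([0,3,2,1,19,17,9,8,7,6,16,11,15,18,14,12,10,5,13,4,20,21,22,23], [[0,4,5,7,8],[1,5,6],[2,4,8],[1,3,7],[6,7,8],[6],[5],[5,6,7],[4,6,7],[4,8,9],[10],[5,7,11]]), ([0,4,1,5,13,7,14,10,9,11,20,12,17,16,15,19,2,8,6,18,3,21,22,23], [[0,1,2,3,5,6,7,8,9],[4,5,6],[1,3,6],[5],[9],[2,4,9],[2,4,7,8,9],[6],[6,8,9],[3,5,8],[2,3,4,5,7,8,10],[2,4,7,8,11]]), ([0,5,1,4,18,8,11,9,10,14,2,12,19,6,15,17,20,7,16,13,3,21,22,23], [[0,1,3,4,5,6,7],[4,5,6,7,8],[1,3,8],[4],[2,4,7],[2,4,7,8,9],[2,4,9],[6,7,8],[2,4,6,7,8],[3,5,6],[2,3,4,5,7,8,10],[6,7,8,9,11]]),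 ([0,6,1,9,5,17,2,7,13,11,14,3,10,18,12,16,20,4,8,19,15,21,22,23], [[0,1,4,5,6],[2,3,4,5,6],[1,2,3,4,5,6,7],[7],[2,4,5],[3,5,7,8,9],[2,3,5,6,7,8,9],[3,4,5,6,7],[8],[3,5,8],[10],[3,4,5,6,8,9,11]]), ([0,7,1,8,17,4,6,2,20,16,9,12,13,11,15,18,10,5,14,19,3,21,22,23], [[0,1,2,3,4,5,6],[2],[1,2,3,4,7,8,9],[2,6,7,8,9],[6,8,9],[2,6,7],[5,6,7,8,9],[2,4,5],[9],[3,5,8],[3,5,8,9,10],[5,7,11]]), ([0,8,1,7,19,5,16,20,2,6,10,12,18,14,15,13,9,4,11,17,3,21,22,23], [[0,1,2,3,6,7,8],[5,8,9],[1,2,3,4,6,7,9],[2,4,5,6,7,8,9],[2,4,6,7,8],[5,6,7,8,9],[2,6,7],[4,8,9],[2,4,7],[3,5,6],[3,5,8,9,10],[4,6,11]]), ([0,9,1,6,19,4,11,13,7,2,20,3,16,8,12,10,14,17,18,5,15,21,22,23], [[0,1,2,4,9],[3,4,5],[1,3,6,7,8],[2],[2,4,9],[2,3,5,6,7,8,9],[3,5,7,8,9],[2,3,4,5,7],[5,8,9],[2,3,4],[10],[3,5,11]]), ([0,10,1,6,7,8,4,14,2,19,5,15,9,11,3,16,17,13,20,18,12,21,22,23], [[0,1,2,3,4],[4],[1,2,3],[2,3,4,5,6,7,8],[2,3,6,7,8],[5,7,8],[2,5,6],[9],[2,3,4,8,9],[3,5,8],[3,7,8,9,10],[11]]), ([0,11,1,2,7,18,9,5,19,6,16,3,20,17,12,14,10,8,4,13,15,21,22,23],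 [[0,1,2,6,7],[2,3,4,8,9],[1,3,5,6,9],[2,4,5,6,8],[6,7,8],[3,6,7],[3,5,9],[3,4,7,8,9],[4,6,9],[3,5,6],[10],[3,5,11]]), ([0,12,2,1,7,18,17,10,6,19,4,20,3,9,11,15,5,8,16,13,14,21,22,23], [[0,5,6,8,9],[1,5,6,8,9],[2,3,4,5,6],[1,3,8],[4,7,8],[4,5,6,7,9],[3,4,7,8,9],[3,5,9],[3,4,5],[9],[3,4,6,7,8,9,10],[5,7,8,9,11]]), ([0,13,1,7,2,14,5,9,6,19,17,3,8,16,12,18,4,20,10,11,15,21,22,23], [[0,1,4,5,6],[3],[1,2,3,4,5],[6,7,8],[2,4,5,6,8],[3,4,5,6,8],[3,4,7,8,9],[3,5,9],[6],[3,5,8],[4,6,8,9,10],[3,4,5,6,8,9,11]]), ([0,14,1,2,19,17,18,10,6,7,13,15,11,9,3,20,8,5,16,4,12,21,22,23], [[0,1,2,3,5,6,8],[2,4,7],[1,3,8],[2,3,4,5,6],[3,5,6,7,9],[7,8,9],[5,6,7],[5],[3,4,5],[3,4,5,6,7,8,9],[3,5,10],[5,7,8,9,11]]), ([0,15,2,1,6,9,18,5,19,7,13,14,12,17,20,3,8,10,4,16,11,21,22,23], [[0,4,5,6,7],[1,3,5,6,7],[2,4,5,6,8],[1,3,5,6,9],[3,5,6,7,9],[3],[8],[4,5,6],[4,6,9],[3,5,7,8,9],[3,5,10],[3,5,11]]), ([0,16,1,6,2,11,8,17,19,7,18,12,10,4,15,9,13,14,5,20,3,21,22,23], [[0,1,3,4,5,6,7],[6],[1,2,3,7,8],[4,7,8],[2,4,8],[7],[8],[4,5,6],[4,5,6,7,9],[3,4,5,6,7,8,9],[3,5,8,9,10],[4,6,11]]),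 ([0,17,1,4,10,6,8,20,14,18,13,3,5,11,12,19,7,9,2,16,15,21,22,23], [[0,1,2],[3,4,7,8,9],[1,3,5,6,7,8,9],[4,8,9],[8],[3,5,6,7,9],[3],[2,3,4,8,9],[2,4,5],[3,5,8],[5,9,10],[3,5,7,8,11]]), ([0,18,1,7,6,16,14,4,19,2,11,15,13,5,3,8,20,9,17,10,12,21,22,23], [[0,1,2,3,5],[4,6,7],[1,3,4,5,6,7,8],[2,3,6,7,8],[2,3,4,5,6,7,8],[2,6,7,8,9],[9],[2,5,6],[3,7,8],[2,3,4],[3,5,10],[5,7,8,9,11]]), ([0,19,1,4,14,11,6,7,18,10,16,15,17,8,3,5,9,20,13,2,12,21,22,23], [[0,1,2,3,5],[4,7,8],[1,3,7],[3,4,5,6,7],[3,6,7],[5],[6,8,9],[7,8,9],[2,3,4,5,7],[2,3,4],[3,7,8,9,10],[5,7,8,9,11]]), ([0,20,1,2,6,9,17,8,7,19,4,12,14,18,15,11,5,10,13,16,3,21,22,23], [[0,1,2,3,4,5,6],[2,4,7,8,9],[1,3,7],[2,4,8],[4,7,8],[4,5,6,7,8],[4,5,6],[8],[4,6,7],[3,5,8],[3,4,6,7,8,9,10],[5,7,11]])],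
  [([0,1,2,3,4,5,6,7,8,9,10,11,12,13,14,15,16,17,18,19,20,21,22,23], [[0],[1],[2],[3],[4],[5],[6],[7],[8],[9],[10],[11]]), ([0,1,2,12,13,8,19,6,10,17,5,20,15,16,11,3,4,18,9,7,14,21,22,23], [[0,4,9],[1,3,9],[2,4,6,7,8],[6],[3,7,8],[3,4,7,8,9],[4,5,6,7,9],[6,8,9],[5],[3,5,7,8,9],[3,4,6,7,8,9,10],[3,4,5,6,8,9,11]]), ([0,1,2,15,16,10,7,19,5,18,8,14,3,4,20,12,13,9,17,6,11,21,22,23], [[0,4,5],[1,5,6,7,8],[2,3,6,7,8],[4,5,6,7,9],[5,8,9],[8],[3],[3,4,5,6,8],[3,4,7,8,9],[4,8,9],[3,5,10],[4,6,11]])],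
  [([0,1,2,3,4,5,6,7,8,9,10,11,12,13,14,15,16,17,18,19,20,21,22,23], [[0],[1],[2],[3],[4],[5],[6],[7],[8],[9],[10],[11]]), ([0,1,4,3,2,20,18,10,9,8,7,17,12,16,19,15,13,11,6,14,5,21,22,23], [[0,5,6,8,9],[1,5,6,8,9],[2,6,7],[3,5,9],[2,4,8],[7,8,9],[7],[6],[6,7,8],[5,7,8],[5,9,10],[11]]), ([0,1,5,3,20,2,13,9,10,7,8,19,12,6,17,15,18,14,16,11,4,21,22,23], [[0,4,9],[1,2,4,5,6,7,8],[5,6,7,8,9],[2,3,4,5,6],[7,8,9],[2,4,8],[8],[6,7,8],[6],[4,7,8],[4,6,8,9,10],[6,8,11]]), ([0,1,6,3,18,13,2,19,17,11,14,9,12,5,10,15,20,8,4,7,16,21,22,23], [[0,4,5,6,7],[1,2,4,5,6,7,8],[2,4,5,6,8],[3,7,8],[2,4,7],[9],[2,4,7,8,9],[4,5,6,7,8],[4,5,6],[5],[10],[5,7,8,9,11]]), ([0,1,7,3,10,9,19,2,20,5,4,13,12,11,18,15,17,16,14,6,8,21,22,23], [[0,2,4,5,6,7,8],[1,2,4,5,6,7,8],[2,4,9],[2,3,4,8,9],[4,5,6,7,9],[2,5,6],[4,6,9],[2,4,5],[4,8,9],[5,6,7],[4,6,8,9,10],[11]]), ([0,1,8,3,9,10,17,20,2,4,5,18,12,14,13,15,19,6,11,16,7,21,22,23], [[0,2,7],[1,5,6,8,9],[2,4,7,8,9],[2,3,5,6,7,8,9],[2,5,6],[4,5,6,7,9],[2,4,5,6,8],[4,8,9],[2,4,5],[4,6,7],[5,9,10],[6,8,11]]),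 ([0,1,9,3,8,7,11,5,4,2,20,6,12,19,16,15,14,18,17,13,10,21,22,23], [[0,2,5,6,7,8,9],[1],[4,5,6,7,8],[2,3,6,7,8],[2,6,7,8,9],[2,4,5,6,7,8,9],[4,8,9],[2,4,5,6,8],[4,6,9],[2,4,6,7,8],[10],[6,8,11]]), ([0,1,10,3,7,8,14,4,5,20,2,16,12,17,6,15,11,13,19,18,9,21,22,23], [[0,4,5],[1,4,5],[4,5,6],[3,4,7,8,9],[2,4,5,6,7,8,9],[2,6,7,8,9],[2,4,5],[4,6,9],[2,4,5,6,8],[6,8,9],[2,4,6,7,8,9,10],[11]]), ([0,1,11,3,17,19,9,13,18,6,16,2,12,7,20,15,10,4,8,5,14,21,22,23], [[0,4,5,7,8],[1,2,4,5,6,7,8],[7],[3,5,6,7,9],[6,8,9],[2,4,6,7,8],[2,6,7],[2],[5,8,9],[2,4,5,6,7,8,9],[10],[2,6,11]]), ([0,1,13,3,16,6,5,11,14,19,17,7,12,2,8,15,4,10,20,9,18,21,22,23], [[0,2,6],[1],[2,4,5],[2,3,4,5,6,7,8],[5,7,8],[4,7,8],[4,5,6],[2,4,9],[2,4,7,8,9],[2,4,8],[4,6,8,9,10],[2,6,11]]), ([0,1,14,3,19,17,10,18,13,16,6,20,12,8,2,15,9,5,7,4,11,21,22,23], [[0,2,5,6,9],[1,5,6,8,9],[8],[2,3,4,5,7],[2,4,6,7,8],[6,8,9],[5,6,7,8,9],[5,8,9],[2],[2,6,7,8,9],[2,4,6,7,8,9,10],[5,7,8,9,11]]), ([0,1,16,3,13,18,20,17,19,14,11,10,12,4,9,15,2,7,5,8,6,21,22,23],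 [[0,2,5,8,9],[1,5,6,8,9],[4,6,9],[3,4,5,6,8],[9],[2,4,7],[2,4,9],[4,5,6],[4,5,6,7,8],[4],[2,4,6,7,8,9,10],[2,6,11]]), ([0,1,17,3,11,14,8,16,6,18,13,4,12,10,5,15,7,2,9,20,19,21,22,23], [[0,2,4,5,6],[1,4,5],[6],[3,6,7],[5,6,7],[4,6,7],[2],[2,6,7],[5,6,7,8,9],[4,5,6,7,9],[5,9,10],[2,6,11]]), ([0,1,18,3,6,16,4,14,11,17,19,8,12,20,7,15,5,9,2,10,13,21,22,23], [[0,2,4,5,8],[1,4,5],[4,8,9],[3,5,7,8,9],[4,7,8],[5,7,8],[4,5,6,7,8],[2,4,7,8,9],[2,4,9],[7,8,9],[5,9,10],[5,7,8,9,11]]), ([0,1,19,3,14,11,7,6,16,13,18,5,12,9,4,15,8,20,10,2,17,21,22,23], [[0,2,8],[1],[6,7,8],[3,4,5],[4,6,7],[5,6,7],[5,8,9],[5,6,7,8,9],[2,6,7],[2,5,6],[4,6,8,9,10],[5,7,8,9,11]]), ([0,1,20,3,5,4,16,8,7,10,9,14,12,18,11,15,6,19,13,17,2,21,22,23], [[0,2,4,6,7,8,9],[1,4,5],[5,8,9],[3,4,5,6,7],[5],[4],[6,7,8],[8],[7],[2,4,7],[2,4,6,7,8,9,10],[6,8,11]])]]"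

definition u1 :: "nat list \<times> nat list list" where "u1 = ([0,1,2,3,16,6,5,8,7,17,19,14,15,13,11,12,4,9,18,10,20,21,23,22], [[0,4,6,9,10,11],[1,7,8,9,10,11],[2,4,5,7,8,9,10,11],[3,5,6,7,8,9,10,11],[5,9,10,11],[4,9,10,11],[4,5,6,9,10,11],[8,9,10,11],[7,9,10,11],[10,11],[4,6,9,11],[4,6,11]])"

definition u2 :: "nat list \<times> nat list list" where "u2 = ([0,1,2,3,8,13,6,19,4,9,16,11,15,5,20,12,10,18,17,7,14,23,22,21], [[0,4,5,6,7,8,9,10],[1,5,9,10],[2,5,9,10],[3,4,6,7,8,10],[4,10],[9,10],[4,8,9,10],[5,7,9,10],[4,5,6,10],[5,10],[10],[5,7,11]])"

definition bl :: "nat list" where "bl = [22,21,23,0,1,3,2]"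
definition Ol :: "nat list" where "Ol = [0,1,3,12,15,21,22,23]"

definition S :: "nat \<Rightarrow> (nat \<Rightarrow> nat) set" where
  "S k = {g \<in> M24. \<forall>j<k. g (bl ! j) = bl ! j}"
definition T :: "nat \<Rightarrow> (nat \<Rightarrow> nat) set" where
  "T k = (\<lambda>pc. pl (fst pc)) ` set (TL ! k)"
definition cov :: "nat \<Rightarrow> nat \<Rightarrow> bool" where
  "cov k y = (if k < 5 then y < 24 \<and> y \<notin> set (take k bl) else if k = 5 then y \<in> set Ol \<and> y \<notin> set (take 5 bl)
     else y < 24 \<and> y \<notin> set Ol)"

definition tlok :: "nat \<Rightarrow> bool" where
  "tlok k = (list_all (\<lambda>pc. chk (fst pc) (snd pc) \<and> list_all (\<lambda>x. fst pc ! x = x) (take k bl)) (TL ! k)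
   \<and> distinct (map (\<lambda>pc. fst pc ! (bl ! k)) (TL ! k))
   \<and> list_all (\<lambda>y. cov k y \<longrightarrow> y \<in> set (map (\<lambda>pc. fst pc ! (bl ! k)) (TL ! k))) [0..<24])"

lemma tlok0: "tlok 0" by code_simp
lemma tlok1: "tlok 1" by code_simp
lemma tlok2: "tlok 2" by code_simp
lemma tlok3: "tlok 3" by code_simp
lemma tlok4: "tlok 4" by code_simp
lemma tlok5: "tlok 5" by code_simp
lemma tlok6: "tlok 6" by code_simp
lemma TL_len: "map length TL = [24,23,22,21,20,3,16]"
  by code_simp

lemma bl_lt: "j < 7 \<Longrightarrow> bl ! j < 24"
proof -
  assume "j < 7"
  then have "j = 0 \<or> j = 1 \<or> j = 2 \<or> j = 3 \<or> j = 4 \<or> j = 5 \<or> j = 6" by arith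
  then show ?thesis by (auto simp: bl_def)
qed

lemma tlok_all: "k < 7 \<Longrightarrow> tlok k"
proof -
  assume "k < 7"
  then have "k = 0 \<or> k = 1 \<or> k = 2 \<or> k = 3 \<or> k = 4 \<or> k = 5 \<or> k = 6" by arith
  then show ?thesis using tlok0 tlok1 tlok2 tlok3 tlok4 tlok5 tlok6 by auto
qed

lemma pl_lt: "x < 24 \<Longrightarrow> pl p x = p ! x" by (simp add: pl_def)

lemma T_props:
  assumes k: "k < 7"
  shows "T k \<subseteq> S k" and "inj_on (\<lambda>t. t (bl ! k)) (T k)" and "card (T k) = length (TL ! k)"
    and "\<And>y. cov k y \<Longrightarrow> \<exists>t\<in>T k. t (bl ! k) = y"
proof -
  have ok: "tlok k" using tlok_all k .
  let ?f = "\<lambda>pc. fst pc ! (bl ! k)"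
  have A: "\<forall>pc\<in>set (TL ! k). chk (fst pc) (snd pc) \<and> (\<forall>x\<in>set (take k bl). fst pc ! x = x)"
    using ok by (simp add: tlok_def list_all_iff)
  have D: "distinct (map ?f (TL ! k))" using ok by (simp add: tlok_def)
  have C: "\<And>y. y < 24 \<Longrightarrow> cov k y \<Longrightarrow> y \<in> ?f ` set (TL ! k)"
    using ok by (simp add: tlok_def list_all_iff)
  have blk: "bl ! k < 24" using bl_lt k .
  show "T k \<subseteq> S k"
  proof
    fix t assume "t \<in> T k"
    then obtain pc where pc: "pc \<in> set (TL ! k)" "t = pl (fst pc)" by (auto simp: T_def)
    have "t \<in> M24" using chk_M24 A pc by blast
    moreover have "t (bl ! j) = bl ! j" if "j < k" for j
    proof -
      have "bl ! j \<in> set (take k bl)" using that k by (auto simp: in_set_conv_nth bl_def intro!: exI[of _ j])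
      then show ?thesis using pc A bl_lt[of j] that k by (simp add: pl_def)
    qed
    ultimately show "t \<in> S k" by (simp add: S_def)
  qed
  have injf: "inj_on ?f (set (TL ! k))" using D by (simp add: distinct_map)
  have injpl: "inj_on (\<lambda>pc. pl (fst pc)) (set (TL ! k))"
  proof (rule inj_onI)
    fix x y assume "x \<in> set (TL ! k)" "y \<in> set (TL ! k)" "pl (fst x) = pl (fst y)"
    then show "x = y" using injf blk by (metis inj_onD pl_lt)
  qed
  show "inj_on (\<lambda>t. t (bl ! k)) (T k)"
  proof (rule inj_onI)
    fix t t' assume "t \<in> T k" "t' \<in> T k" and e: "t (bl ! k) = t' (bl ! k)"
    then obtain pc pc' where "pc \<in> set (TL ! k)" "t = pl (fst pc)" "pc' \<in> set (TL ! k)" "t' = pl (fst pc')"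
      by (auto simp: T_def)
    then show "t = t'" using e injf blk by (metis inj_onD pl_lt)
  qed
  show "card (T k) = length (TL ! k)"
    unfolding T_def using card_image[OF injpl] D distinct_card distinct_map by metis
  fix y assume "cov k y"
  moreover have "y < 24" using \<open>cov k y\<close> unfolding cov_def Ol_def by (auto split: if_splits)
  ultimately obtain pc where "pc \<in> set (TL ! k)" "?f pc = y" using C by blast
  then show "\<exists>t\<in>T k. t (bl ! k) = y" using blk by (auto simp: T_def pl_lt)
qed

lemma S_sub: "S (Suc k) \<subseteq> S k" by (auto simp: S_def)

lemma chain_step:
  assumes k: "k < 7" and cv: "\<And>g. g \<in> S k \<Longrightarrow> cov k (g (bl ! k))"
  shows "bij_betw (\<lambda>(t, h). t \<circ> h) (T k \<times> S (Suc k)) (S k)"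
    and "card (S k) = length (TL ! k) * card (S (Suc k))"
proof -
  note TP = T_props[OF k]
  show bij: "bij_betw (\<lambda>(t, h). t \<circ> h) (T k \<times> S (Suc k)) (S k)"
  proof (rule bij_betw_imageI)
    show "inj_on (\<lambda>(t, h). t \<circ> h) (T k \<times> S (Suc k))"
    proof (rule inj_onI, clarsimp)
      fix t h t' h' assume t: "t \<in> T k" "t' \<in> T k" and h: "h \<in> S (Suc k)" "h' \<in> S (Suc k)"
        and e: "t \<circ> h = t' \<circ> h'"
      have "h (bl ! k) = bl ! k" "h' (bl ! k) = bl ! k" using h by (auto simp: S_def)
      then have "t (bl ! k) = t' (bl ! k)" using e by (metis comp_apply)
      then have tt: "t = t'" using TP(2) t by (meson inj_onD)
      have "inj t" using t TP(1) M24_inj by (auto simp: S_def)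
      then have "h = h'" using e tt by (metis fun.inj_map_strong inj_eq)
      then show "t = t' \<and> h = h'" using tt by simp
    qed
    show "(\<lambda>(t, h). t \<circ> h) ` (T k \<times> S (Suc k)) = S k"
    proof
      show "(\<lambda>(t, h). t \<circ> h) ` (T k \<times> S (Suc k)) \<subseteq> S k"
      proof clarsimp
        fix t h assume "t \<in> T k" "h \<in> S (Suc k)"
        then have "t \<in> S k" "h \<in> S k" using TP(1) S_sub by auto
        then show "t \<circ> h \<in> S k" by (auto simp: S_def M24_comp)
      qed
      show "S k \<subseteq> (\<lambda>(t, h). t \<circ> h) ` (T k \<times> S (Suc k))"
      proof
        fix g assume g: "g \<in> S k"
        obtain t where t: "t \<in> T k" "t (bl ! k) = g (bl ! k)" using TP(4) cv[OF g] by blast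
        have tS: "t \<in> S k" using t TP(1) by auto
        then have tM: "t \<in> M24" by (simp add: S_def)
        have gM: "g \<in> M24" using g by (simp add: S_def)
        let ?h = "inv t \<circ> g"
        have hM: "?h \<in> M24" using M24_comp M24_inv tM gM by blast
        have "?h (bl ! j) = bl ! j" if "j < Suc k" for j
        proof (cases "j = k")
          case True then show ?thesis using t M24_inv_apply1[OF tM] by (metis comp_apply)
        next
          case False
          then have "j < k" using that by simp
          then have "g (bl ! j) = bl ! j" "t (bl ! j) = bl ! j" using g tS by (auto simp: S_def)
          then show ?thesis using M24_inv_apply1[OF tM] by (metis comp_apply)
        qed
        then have hS: "?h \<in> S (Suc k)" using hM by (simp add: S_def)
        have "t \<circ> ?h = g" using M24_inv_apply2[OF tM] by (simp add: fun_eq_iff)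
        then show "g \<in> (\<lambda>(t, h). t \<circ> h) ` (T k \<times> S (Suc k))"
          using t hS by (intro image_eqI[where x="(t, inv t \<circ> g)"]) auto
      qed
    qed
  qed
  have "card (S k) = card (T k \<times> S (Suc k))" using bij_betw_same_card[OF bij] by simp
  also have "... = length (TL ! k) * card (S (Suc k))" using TP(3) by (simp add: card_cartesian_product)
  finally show "card (S k) = length (TL ! k) * card (S (Suc k))" .
qed

lemma bl_distinct: "distinct bl" by (simp add: bl_def)
lemma bl_len: "length bl = 7" by (simp add: bl_def)

lemma S_M24: "g \<in> S k \<Longrightarrow> g \<in> M24" by (simp add: S_def)

lemma S_notin_take:
  assumes g: "g \<in> S k" and k: "k < 7"
  shows "g (bl ! k) \<notin> set (take k bl)"
proof
  assume "g (bl ! k) \<in> set (take k bl)"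
  then obtain j where j: "j < k" "g (bl ! k) = bl ! j" using k bl_len by (auto simp: in_set_conv_nth)
  then have "g (bl ! j) = bl ! j" using g by (simp add: S_def)
  then have "bl ! k = bl ! j" using j M24_inj[OF S_M24[OF g]] by (metis injD)
  then show False using j k bl_distinct bl_len by (simp add: nth_eq_iff_index_eq)
qed

lemma S_lt: "g \<in> S k \<Longrightarrow> k < 7 \<Longrightarrow> g (bl ! k) < 24"
  using M24_Theta[OF S_M24, of g k "bl ! k"] bl_lt by (simp add: Theta_lt)

lemma O_eq: "set Ol = {0,1,3,12,15,21,22,23}" by (simp add: Ol_def)

lemma S5_O: assumes g: "g \<in> S 5" shows "g ` set Ol = set Ol"
proof -
  have fx: "g x = x" if "x \<in> {22,21,23,0,1}" for x
  proof -
    have "\<exists>j<5. x = bl ! j" using that by (auto simp: bl_def) (rule exI[of _ 0]; simp; fail | rule exI[of _ 1]; simp; fail | rule exI[of _ 2]; simp; fail | rule exI[of _ 3]; simp; fail | rule exI[of _ 4]; simp)+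
    then show ?thesis using g by (auto simp: S_def)
  qed
  show ?thesis unfolding O_eq
    by (rule octad_fix[OF S_M24[OF g] oct0, where A="{22,21,23,0,1}"]) (use fx in auto)
qed

lemma cov_all: assumes k: "k < 7" and g: "g \<in> S k" shows "cov k (g (bl ! k))"
proof -
  have lt: "g (bl ! k) < 24" using S_lt g k .
  have nt: "g (bl ! k) \<notin> set (take k bl)" using S_notin_take g k .
  consider "k < 5" | "k = 5" | "k = 6" using k by arith
  then show ?thesis
  proof cases
    case 1 then show ?thesis using lt nt by (simp add: cov_def)
  next
    case 2
    then have "g ` set Ol = set Ol" using S5_O g by simp
    moreover have "bl ! 5 \<in> set Ol" by (simp add: bl_def Ol_def)
    ultimately have "g (bl ! 5) \<in> set Ol" by blast
    then show ?thesis using 2 nt by (simp add: cov_def)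
  next
    case 3
    then have "g \<in> S 5" using g S_sub[of 5] by (auto simp: numeral_eq_Suc)
    then have e: "g ` set Ol = set Ol" using S5_O by simp
    have "bl ! 6 \<notin> set Ol" by (simp add: bl_def Ol_def)
    then have "g (bl ! 6) \<notin> set Ol" using e M24_inj[OF S_M24[OF g]]
      by (metis inj_image_mem_iff)
    then show ?thesis using 3 lt by (simp add: cov_def)
  qed
qed

lemma S7_id: "S 7 = {id}"
proof
  show "{id} \<subseteq> S 7" by (simp add: S_def M24_id)
  show "S 7 \<subseteq> {id}"
  proof
    fix g assume g: "g \<in> S 7"
    have gM: "g \<in> M24" using g by (simp add: S_def)
    have gi: "inj g" using M24_inj[OF gM] .
    have fb: "g (bl ! j) = bl ! j" if "j < 7" for j using g that by (simp add: S_def)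
    have f22: "g 22 = 22" using fb[of 0] by (simp add: bl_def)
    have f21: "g 21 = 21" using fb[of 1] by (simp add: bl_def)
    have f23: "g 23 = 23" using fb[of 2] by (simp add: bl_def)
    have f0: "g 0 = 0" using fb[of 3] by (simp add: bl_def)
    have f1: "g 1 = 1" "g (Suc 0) = Suc 0" using fb[of 4] by (simp_all add: bl_def)
    have f3: "g 3 = 3" using fb[of 5] by (simp add: bl_def)
    have f2: "g 2 = 2" using fb[of 6] by (simp add: bl_def)
    have pC0: "g ` {0,1,3,12,15,21,22,23} = {0,1,3,12,15,21,22,23}"
      by (rule octad_fix[OF gM oct0, where A="{0,1,3,21,22}"]) (auto simp: f0 f1 f3 f21 f22)
    have pC1: "g ` {0,1,2,3,5,14,17,23} = {0,1,2,3,5,14,17,23}"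
      by (rule octad_fix[OF gM oct1, where A="{0,1,2,3,23}"]) (auto simp: f0 f1 f2 f3 f23)
    have pC2: "g ` {0,2,3,7,16,17,21,22} = {0,2,3,7,16,17,21,22}"
      by (rule octad_fix[OF gM oct2, where A="{0,2,3,21,22}"]) (auto simp: f0 f2 f3 f21 f22)
    have f17: "g 17 = 17"
      by (rule fix_step[OF gi pC1 pC2, where A="{0,1,2,3,21,22,23}"]) (auto simp: f22 f21 f23 f0 f1 f3 f2)
    have pC3: "g ` {3,8,10,14,17,21,22,23} = {3,8,10,14,17,21,22,23}"
      by (rule octad_fix[OF gM oct3, where A="{3,17,21,22,23}"]) (auto simp: f3 f17 f21 f22 f23)
    have f14: "g 14 = 14"
      by (rule fix_step[OF gi pC1 pC3, where A="{0,1,2,3,17,21,22,23}"]) (auto simp: f22 f21 f23 f0 f1 f3 f2 f17)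
    have f5: "g 5 = 5"
      by (rule fix_step[OF gi pC1 pC1, where A="{0,1,2,3,14,17,21,22,23}"]) (auto simp: f22 f21 f23 f0 f1 f3 f2 f17 f14)
    have pC4: "g ` {2,3,5,8,14,16,20,21} = {2,3,5,8,14,16,20,21}"
      by (rule octad_fix[OF gM oct4, where A="{2,3,5,14,21}"]) (auto simp: f2 f3 f5 f14 f21)
    have pC5: "g ` {1,3,6,9,14,20,21,23} = {1,3,6,9,14,20,21,23}"
      by (rule octad_fix[OF gM oct5, where A="{1,3,14,21,23}"]) (auto simp: f1 f3 f14 f21 f23)
    have f20: "g 20 = 20"
      by (rule fix_step[OF gi pC4 pC5, where A="{0,1,2,3,5,14,17,21,22,23}"]) (auto simp: f22 f21 f23 f0 f1 f3 f2 f17 f14 f5)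
    have pC6: "g ` {0,2,11,14,20,21,22,23} = {0,2,11,14,20,21,22,23}"
      by (rule octad_fix[OF gM oct6, where A="{0,2,14,20,21}"]) (auto simp: f0 f2 f14 f20 f21)
    have f11: "g 11 = 11"
      by (rule fix_step[OF gi pC6 pC6, where A="{0,1,2,3,5,14,17,20,21,22,23}"]) (auto simp: f22 f21 f23 f0 f1 f3 f2 f17 f14 f5 f20)
    have pC7: "g ` {0,2,4,5,6,10,11,23} = {0,2,4,5,6,10,11,23}"
      by (rule octad_fix[OF gM oct7, where A="{0,2,5,11,23}"]) (auto simp: f0 f2 f5 f11 f23)
    have pC8: "g ` {1,3,5,6,7,11,12,23} = {1,3,5,6,7,11,12,23}"
      by (rule octad_fix[OF gM oct8, where A="{1,3,5,11,23}"]) (auto simp: f1 f3 f5 f11 f23)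
    have f6: "g 6 = 6"
      by (rule fix_step[OF gi pC7 pC8, where A="{0,1,2,3,5,11,14,17,20,21,22,23}"]) (auto simp: f22 f21 f23 f0 f1 f3 f2 f17 f14 f5 f20 f11)
    have pC9: "g ` {1,2,6,11,13,17,20,23} = {1,2,6,11,13,17,20,23}"
      by (rule octad_fix[OF gM oct9, where A="{1,2,6,11,17}"]) (auto simp: f1 f2 f6 f11 f17)
    have f13: "g 13 = 13"
      by (rule fix_step[OF gi pC9 pC9, where A="{0,1,2,3,5,6,11,14,17,20,21,22,23}"]) (auto simp: f22 f21 f23 f0 f1 f3 f2 f17 f14 f5 f20 f11 f6)
    have f9: "g 9 = 9"
      by (rule fix_step[OF gi pC5 pC5, where A="{0,1,2,3,5,6,11,13,14,17,20,21,22,23}"]) (auto simp: f22 f21 f23 f0 f1 f3 f2 f17 f14 f5 f20 f11 f6 f13)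
    have pC10: "g ` {1,3,5,6,9,13,17,18} = {1,3,5,6,9,13,17,18}"
      by (rule octad_fix[OF gM oct10, where A="{1,3,5,6,9}"]) (auto simp: f1 f3 f5 f6 f9)
    have f18: "g 18 = 18"
      by (rule fix_step[OF gi pC10 pC10, where A="{0,1,2,3,5,6,9,11,13,14,17,20,21,22,23}"]) (auto simp: f22 f21 f23 f0 f1 f3 f2 f17 f14 f5 f20 f11 f6 f13 f9)
    have pC11: "g ` {1,2,3,4,5,8,11,13} = {1,2,3,4,5,8,11,13}"
      by (rule octad_fix[OF gM oct11, where A="{1,2,3,5,11}"]) (auto simp: f1 f2 f3 f5 f11)
    have f4: "g 4 = 4"
      by (rule fix_step[OF gi pC7 pC11, where A="{0,1,2,3,5,6,9,11,13,14,17,18,20,21,22,23}"]) (auto simp: f22 f21 f23 f0 f1 f3 f2 f17 f14 f5 f20 f11 f6 f13 f9 f18)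
    have f10: "g 10 = 10"
      by (rule fix_step[OF gi pC7 pC7, where A="{0,1,2,3,4,5,6,9,11,13,14,17,18,20,21,22,23}"]) (auto simp: f22 f21 f23 f0 f1 f3 f2 f17 f14 f5 f20 f11 f6 f13 f9 f18 f4)
    have f8: "g 8 = 8"
      by (rule fix_step[OF gi pC11 pC11, where A="{0,1,2,3,4,5,6,9,10,11,13,14,17,18,20,21,22,23}"]) (auto simp: f22 f21 f23 f0 f1 f3 f2 f17 f14 f5 f20 f11 f6 f13 f9 f18 f4 f10)
    have pC12: "g ` {3,5,7,8,9,13,14,23} = {3,5,7,8,9,13,14,23}"
      by (rule octad_fix[OF gM oct12, where A="{3,5,8,9,13}"]) (auto simp: f3 f5 f8 f9 f13)
    have f7: "g 7 = 7"
      by (rule fix_step[OF gi pC12 pC12, where A="{0,1,2,3,4,5,6,8,9,10,11,13,14,17,18,20,21,22,23}"]) (auto simp: f22 f21 f23 f0 f1 f3 f2 f17 f14 f5 f20 f11 f6 f13 f9 f18 f4 f10 f8)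
    have f12: "g 12 = 12"
      by (rule fix_step[OF gi pC8 pC8, where A="{0,1,2,3,4,5,6,7,8,9,10,11,13,14,17,18,20,21,22,23}"]) (auto simp: f22 f21 f23 f0 f1 f3 f2 f17 f14 f5 f20 f11 f6 f13 f9 f18 f4 f10 f8 f7)
    have pC13: "g ` {4,6,8,9,10,14,15,23} = {4,6,8,9,10,14,15,23}"
      by (rule octad_fix[OF gM oct13, where A="{4,6,8,9,10}"]) (auto simp: f4 f6 f8 f9 f10)
    have f15: "g 15 = 15"
      by (rule fix_step[OF gi pC13 pC13, where A="{0,1,2,3,4,5,6,7,8,9,10,11,12,13,14,17,18,20,21,22,23}"]) (auto simp: f22 f21 f23 f0 f1 f3 f2 f17 f14 f5 f20 f11 f6 f13 f9 f18 f4 f10 f8 f7 f12)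
    have pC14: "g ` {5,7,9,10,11,15,16,23} = {5,7,9,10,11,15,16,23}"
      by (rule octad_fix[OF gM oct14, where A="{5,7,9,10,11}"]) (auto simp: f5 f7 f9 f10 f11)
    have f16: "g 16 = 16"
      by (rule fix_step[OF gi pC14 pC14, where A="{0,1,2,3,4,5,6,7,8,9,10,11,12,13,14,15,17,18,20,21,22,23}"]) (auto simp: f22 f21 f23 f0 f1 f3 f2 f17 f14 f5 f20 f11 f6 f13 f9 f18 f4 f10 f8 f7 f12 f15)
    have pC15: "g ` {8,10,12,13,14,18,19,23} = {8,10,12,13,14,18,19,23}"
      by (rule octad_fix[OF gM oct15, where A="{8,10,12,13,14}"]) (auto simp: f8 f10 f12 f13 f14)
    have f19: "g 19 = 19"
      by (rule fix_step[OF gi pC15 pC15, where A="{0,1,2,3,4,5,6,7,8,9,10,11,12,13,14,15,16,17,18,20,21,22,23}"]) (auto simp: f22 f21 f23 f0 f1 f3 f2 f17 f14 f5 f20 f11 f6 f13 f9 f18 f4 f10 f8 f7 f12 f15 f16)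
  
    have "g x = x" for x
    proof (cases "x < 24")
      case True
      then have "x = 0 \<or> x = 1 \<or> x = 2 \<or> x = 3 \<or> x = 4 \<or> x = 5 \<or> x = 6 \<or> x = 7 \<or> x = 8 \<or> x = 9 \<or> x = 10 \<or> x = 11 \<or> x = 12 \<or> x = 13 \<or> x = 14 \<or> x = 15 \<or> x = 16 \<or> x = 17 \<or> x = 18 \<or> x = 19 \<or> x = 20 \<or> x = 21 \<or> x = 22 \<or> x = 23" by arith
      then show ?thesis using f0 f1 f2 f3 f4 f5 f6 f7 f8 f9 f10 f11 f12 f13 f14 f15 f16 f17 f18 f19 f20 f21 f22 f23 by auto
    next
      case False
      then show ?thesis using M24_perm[OF gM] by (simp add: permutes_def Theta_lt)
    qed
    then show "g \<in> {id}" by (simp add: fun_eq_iff)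
  qed
qed

lemma TL_lens: "length (TL ! 0) = 24" "length (TL ! 1) = 23" "length (TL ! 2) = 22" "length (TL ! 3) = 21"
  "length (TL ! 4) = 20" "length (TL ! 5) = 3" "length (TL ! 6) = 16"
  using TL_len by (simp_all add: list_eq_iff_nth_eq)

lemma card_S: "card (S k) = length (TL ! k) * card (S (k + 1))" if "k < 7"
proof -
  have "card (S k) = length (TL ! k) * card (S (Suc k))"
    by (rule chain_step(2)) (use that cov_all in auto)
  then show ?thesis by simp
qed

lemma card_S7: "card (S 7) = 1" using S7_id by simp
lemma card_S6: "card (S 6) = 16" using card_S[of 6] card_S7 TL_lens by simp
lemma card_S5: "card (S 5) = 48" using card_S[of 5] card_S6 TL_lens by simp
lemma card_S4: "card (S 4) = 960" using card_S[of 4] card_S5 TL_lens by simp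
lemma card_S3: "card (S 3) = 20160" using card_S[of 3] card_S4 TL_lens by simp
lemma card_S2: "card (S 2) = 443520" using card_S[of 2] card_S3 TL_lens by simp
lemma card_S1: "card (S 1) = 10200960" using card_S[of 1, unfolded one_add_one] card_S2 TL_lens by simp
lemma S0: "S 0 = M24" by (simp add: S_def)
lemma card_M24: "card M24 = 244823040" using card_S[of 0] card_S1 TL_lens S0 by simp

definition fc :: "nat list \<Rightarrow> nat" where "fc c = length (filter (\<lambda>i. c ! i = i) [0..<24])"
definition Qc :: "nat list \<Rightarrow> bool" where
  "Qc c = (c = [0..<24] \<or> fc c < 8 \<or> (fc c = 8 \<and> map (nth c) c = [0..<24]))"

lemma Q_check: "list_all (\<lambda>a. list_all (\<lambda>b. Qc (map (nth (fst a)) (fst b))) (TL ! 6)) (TL ! 5)"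
  by code_simp

lemma S6_eq: "S 6 = T 6"
proof -
  have "S 6 = (\<lambda>(t, h). t \<circ> h) ` (T 6 \<times> S 7)"
    using bij_betw_imp_surj_on[OF chain_step(1)[of 6]] cov_all by (simp add: numeral_eq_Suc)
  also have "... = T 6" using S7_id by (auto simp: image_iff)
  finally show ?thesis .
qed

lemma S5_eq: "S 5 = (\<lambda>(t, h). t \<circ> h) ` (T 5 \<times> T 6)"
proof -
  have "S 5 = (\<lambda>(t, h). t \<circ> h) ` (T 5 \<times> S 6)"
    using bij_betw_imp_surj_on[OF chain_step(1)[of 5]] cov_all by (simp add: numeral_eq_Suc)
  then show ?thesis using S6_eq by simp
qed

lemma chk_props: "chk p cs \<Longrightarrow> length p = 24 \<and> (\<forall>i\<in>set p. i < 24)"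
  by (simp add: chk_def list_all_iff)

lemma pl_comp: "length b = 24 \<Longrightarrow> \<forall>i\<in>set b. i < 24 \<Longrightarrow> pl a \<circ> pl b = pl (map (nth a) b)"
  by (auto simp: fun_eq_iff pl_def)

lemma pl_id: "pl [0..<24] = id" by (auto simp: fun_eq_iff pl_def)

lemma pl_eq_id: "length c = 24 \<Longrightarrow> pl c = id \<Longrightarrow> c = [0..<24]"
proof (rule nth_equalityI)
  assume "length c = 24" "pl c = id"
  then show "length c = length [0..<24]" by simp
  fix i assume "i < length c"
  then show "c ! i = [0..<24] ! i" using \<open>pl c = id\<close> \<open>length c = 24\<close>
    by (metis diff_zero id_apply nth_upt pl_def plus_nat.add_0)
qed

lemma fix_card: "length c = 24 \<Longrightarrow> card {x \<in> Theta. pl c x = x} = fc c"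
proof -
  assume l: "length c = 24"
  have "{x \<in> Theta. pl c x = x} = set (filter (\<lambda>i. c ! i = i) [0..<24])"
    by (auto simp: Theta_def pl_def)
  then show ?thesis unfolding fc_def using distinct_card[OF distinct_filter[OF distinct_upt]] by metis
qed

lemma S5_Q: assumes s: "s \<in> S 5" shows "\<exists>c. length c = 24 \<and> (\<forall>i\<in>set c. i < 24) \<and> s = pl c \<and> Qc c"
proof -
  obtain t h where th: "t \<in> T 5" "h \<in> T 6" "s = t \<circ> h" using s S5_eq by auto
  obtain a where a: "a \<in> set (TL ! 5)" "t = pl (fst a)" using th by (auto simp: T_def)
  obtain b where b: "b \<in> set (TL ! 6)" "h = pl (fst b)" using th by (auto simp: T_def)
  have ca: "chk (fst a) (snd a)" using tlok_all[of 5] a by (simp add: tlok_def list_all_iff)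
  have cb: "chk (fst b) (snd b)" using tlok_all[of 6] b by (simp add: tlok_def list_all_iff)
  let ?c = "map (nth (fst a)) (fst b)"
  have "s = pl ?c" using th a b pl_comp chk_props[OF cb] by simp
  moreover have "Qc ?c" using Q_check a b by (simp add: list_all_iff)
  moreover have "length ?c = 24" using chk_props[OF cb] by simp
  moreover have "\<forall>i\<in>set ?c. i < 24" using chk_props[OF ca] chk_props[OF cb] by auto
  ultimately show ?thesis by blast
qed

lemma trans5:
  "k \<le> 5 \<Longrightarrow> length xs = k \<Longrightarrow> distinct xs \<Longrightarrow> set xs \<subseteq> Theta \<Longrightarrow>
   \<exists>g\<in>M24. \<forall>j<k. g (bl ! j) = xs ! j"
proof (induction k arbitrary: xs)
  case 0 then show ?case using M24_id by blast
next
  case (Suc k)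
  then obtain ys z where xs: "xs = ys @ [z]" by (metis length_Suc_conv_rev)
  have ys: "length ys = k" "distinct ys" "set ys \<subseteq> Theta" "z \<notin> set ys" "z \<in> Theta"
    using Suc.prems xs by auto
  obtain g where g: "g \<in> M24" "\<forall>j<k. g (bl ! j) = ys ! j" using Suc.IH[OF _ ys(1-3)] Suc.prems by auto
  let ?y = "inv g z"
  have gy: "g ?y = z" using M24_inv_apply2[OF g(1)] .
  have yT: "?y \<in> Theta" using M24_Theta[OF g(1), of ?y] gy ys(5) by simp
  have "?y \<notin> set (take k bl)"
  proof
    assume "?y \<in> set (take k bl)"
    then obtain j where j: "j < k" "?y = bl ! j" using bl_len Suc.prems by (auto simp: in_set_conv_nth)
    then have "z = ys ! j" using g gy by metis
    then show False using ys j by (metis nth_mem)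
  qed
  then have "cov k ?y" using yT Suc.prems by (simp add: cov_def Theta_lt)
  then obtain t where t: "t \<in> T k" "t (bl ! k) = ?y" using T_props(4)[of k] Suc.prems by auto
  have tS: "t \<in> S k" using t T_props(1)[of k] Suc.prems by auto
  show ?case
  proof (intro bexI[of _ "g \<circ> t"] allI impI)
    show "g \<circ> t \<in> M24" using M24_comp g tS by (simp add: S_def)
    fix j assume j: "j < Suc k"
    show "(g \<circ> t) (bl ! j) = xs ! j"
    proof (cases "j = k")
      case True then show ?thesis using t gy xs ys(1) by (simp add: nth_append)
    next
      case False
      then have "j < k" using j by simp
      then show ?thesis using tS g xs ys(1) by (simp add: S_def nth_append)
    qed
  qed
qed

lemma L_fix:
  assumes r: "r \<in> M24" and rid: "r \<noteq> id"
  shows "card {x \<in> Theta. r x = x} \<le> 8 \<and> (card {x \<in> Theta. r x = x} = 8 \<longrightarrow> r \<circ> r = id)"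
proof (cases "card {x \<in> Theta. r x = x} < 5")
  case True then show ?thesis by simp
next
  case False
  let ?F = "{x \<in> Theta. r x = x}"
  have fin: "finite ?F" by (simp add: Theta_def)
  let ?xs = "take 5 (sorted_list_of_set ?F)"
  have xs: "length ?xs = 5" "distinct ?xs" "set ?xs \<subseteq> Theta" "set ?xs \<subseteq> ?F"
    using False fin by (auto dest: in_set_takeD)
  obtain g where g: "g \<in> M24" "\<forall>j<5. g (bl ! j) = ?xs ! j" using trans5[OF _ xs(1-3)] by auto
  let ?s = "inv g \<circ> r \<circ> g"
  have sM: "?s \<in> M24" using M24_comp M24_inv g r by blast
  have "?s (bl ! j) = bl ! j" if "j < 5" for j
  proof -
    have "?xs ! j \<in> ?F" using xs that by (metis nth_mem subsetD)
    then have "r (g (bl ! j)) = g (bl ! j)" using g that by simp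
    then show ?thesis using M24_inv_apply1[OF g(1)] by simp
  qed
  then have sS: "?s \<in> S 5" using sM by (simp add: S_def)
  obtain c where c: "length c = 24" "\<forall>i\<in>set c. i < 24" "?s = pl c" "Qc c" using S5_Q[OF sS] by blast
  have "?s \<noteq> id"
  proof
    assume "?s = id"
    then have "g \<circ> ?s \<circ> inv g = g \<circ> inv g" by simp
    then have "r = id" using M24_inv_apply1[OF g(1)] M24_inv_apply2[OF g(1)] by (simp add: fun_eq_iff)
    then show False using rid by simp
  qed
  then have cn: "c \<noteq> [0..<24]" using c pl_id by auto
  have Fs: "?F = g ` {x \<in> Theta. ?s x = x}"
  proof
    show "?F \<subseteq> g ` {x \<in> Theta. ?s x = x}"
    proof
      fix y assume y: "y \<in> ?F"
      let ?x = "inv g y"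
      have "?x \<in> Theta" using y M24_Theta[OF g(1), of ?x] M24_inv_apply2[OF g(1)] by simp
      moreover have "?s ?x = ?x" using y M24_inv_apply2[OF g(1)] by simp
      ultimately have "?x \<in> {x \<in> Theta. ?s x = x}" by simp
      moreover have "y = g ?x" using M24_inv_apply2[OF g(1)] by simp
      ultimately show "y \<in> g ` {x \<in> Theta. ?s x = x}" by (rule rev_image_eqI)
    qed
    show "g ` {x \<in> Theta. ?s x = x} \<subseteq> ?F"
    proof clarify
      fix x assume x: "x \<in> Theta" "?s x = x"
      then have "g (inv g (r (g x))) = g x" by simp
      then have "r (g x) = g x" using M24_inv_apply2[OF g(1)] by simp
      then show "g x \<in> Theta \<and> r (g x) = g x" using x M24_Theta[OF g(1)] by simp
    qed
  qed
  have "card ?F = card {x \<in> Theta. ?s x = x}"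
    unfolding Fs by (rule card_image) (meson M24_inj g(1) inj_on_subset subset_UNIV)
  also have "... = fc c" using fix_card[OF c(1)] c(3) by simp
  finally have cF: "card ?F = fc c" .
  have "fc c \<le> 8" using c(4) cn by (auto simp: Qc_def)
  moreover have "r \<circ> r = id" if "fc c = 8"
  proof -
    have "map (nth c) c = [0..<24]" using c(4) cn that by (auto simp: Qc_def)
    then have "?s \<circ> ?s = id" using c pl_comp pl_id by metis
    then have "\<forall>x. inv g (r (r (g x))) = x" using M24_inv_apply1[OF g(1)] M24_inv_apply2[OF g(1)] by (simp add: fun_eq_iff)
    then have "\<forall>y. r (r y) = y"
      by (metis M24_inv_apply2[OF g(1)] M24_inv_apply1[OF g(1)])
    then show ?thesis by (simp add: fun_eq_iff)
  qed
  ultimately show ?thesis using cF by simp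
qed

lemma tri_transpose: "inj p \<Longrightarrow> tri F p = Transposition.transpose F (p F) \<circ> p"
  by (auto simp: fun_eq_iff tri_def Transposition.transpose_def dest: injD)

lemma permutes_remove: "f permutes U \<Longrightarrow> \<forall>y\<in>R. f y = y \<Longrightarrow> f permutes (U - R)"
  unfolding permutes_def by blast

lemma tri_perm: assumes F: "F \<in> Theta" and p: "p \<in> M24" shows "tri F p permutes (Theta - {F})"
proof -
  have pF: "p F \<in> Theta" using M24_Theta[OF p] F by simp
  have "tri F p permutes Theta"
    unfolding tri_transpose[OF M24_inj[OF p]] by (rule permutes_compose[OF M24_perm[OF p] permutes_swap_id[OF F pF]])
  moreover have "tri F p F = F" by (simp add: tri_def)
  ultimately show ?thesis using permutes_remove[of "tri F p" Theta "{F}"] by simp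
qed

lemma card_Theta: "card Theta = 24" by (simp add: Theta_def)

lemma dist_main:
  assumes F: "F \<in> Theta" and p: "p \<in> M24" and q: "q \<in> M24" and pq: "p \<noteq> q"
  shows "14 \<le> card {x \<in> Theta - {F}. tri F p x \<noteq> tri F q x}"
proof -
  let ?r = "inv q \<circ> p"
  let ?DZ = "{x \<in> Theta. p x \<noteq> q x}"
  let ?DD = "{x \<in> Theta - {F}. tri F p x \<noteq> tri F q x}"
  define a where "a = inv p F"
  define b where "b = inv q F"
  have pa: "p a = F" using M24_inv_apply2[OF p] a_def by simp
  have qb: "q b = F" using M24_inv_apply2[OF q] b_def by simp
  have pinj: "inj p" and qinj: "inj q" using M24_inj p q by auto
  have rM: "?r \<in> M24" using M24_comp M24_inv p q by blast
  have req: "?r x = x \<longleftrightarrow> p x = q x" for x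
  proof
    assume "?r x = x" then have "q (inv q (p x)) = q x" by simp
    then show "p x = q x" using M24_inv_apply2[OF q] by simp
  next
    assume "p x = q x" then show "?r x = x" using M24_inv_apply1[OF q] by simp
  qed
  have rid: "?r \<noteq> id"
  proof
    assume "?r = id" then have "?r x = x" for x by simp
    then have "p x = q x" for x using req by blast
    then show False using pq by (simp add: fun_eq_iff)
  qed
  have fixeq: "{x \<in> Theta. ?r x = x} = Theta - ?DZ"
  proof (rule set_eqI)
    fix x show "x \<in> {x \<in> Theta. ?r x = x} \<longleftrightarrow> x \<in> Theta - ?DZ" using req[of x] by blast
  qed
  have finT: "finite Theta" by (simp add: Theta_def)
  have D0sub: "?DZ \<subseteq> Theta" by auto
  have c1: "card (Theta - ?DZ) = 24 - card ?DZ"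
    using card_Diff_subset[OF finite_subset[OF D0sub finT] D0sub] card_Theta by simp
  have c2: "card ?DZ \<le> 24" using card_mono[OF finT D0sub] card_Theta by simp
  have cD0: "card ?DZ = 24 - card {x \<in> Theta. ?r x = x}"
    unfolding fixeq using c1 c2 by linarith
  have Lr: "card {x \<in> Theta. ?r x = x} \<le> 8" "card {x \<in> Theta. ?r x = x} = 8 \<longrightarrow> ?r \<circ> ?r = id"
    using L_fix[OF rM rid] by blast+
  have c16: "16 \<le> card ?DZ" using cD0 Lr(1) by simp
  have sub: "?DZ - {F, a, b} \<subseteq> ?DD"
  proof
    fix x assume x: "x \<in> ?DZ - {F, a, b}"
    then have xa: "x \<noteq> a" and xb: "x \<noteq> b" by auto
    have "p x \<noteq> F" using xa pa pinj by (metis injD)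
    moreover have "q x \<noteq> F" using xb qb qinj by (metis injD)
    ultimately show "x \<in> ?DD" using x by (auto simp: tri_def)
  qed
  have finD: "finite ?DD" using finT by simp
  have key: "14 \<le> card ?DD" if E: "?DZ - E \<subseteq> ?DD" "card E \<le> card ?DZ - 14" "finite E" for E
  proof -
    have "card ?DZ - card E \<le> card (?DZ - E)" by (rule diff_card_le_card_Diff[OF E(3)])
    also have "... \<le> card ?DD" by (rule card_mono[OF finD E(1)])
    finally show ?thesis using E(2) c16 by linarith
  qed
  have c3: "card {F, a, b} \<le> 3" by (simp add: card_insert_le_m1)
  show ?thesis
  proof (cases "17 \<le> card ?DZ")
    case True then show ?thesis using key[OF sub] c3 by simp
  next
    case False
    then have e16: "card ?DZ = 16" using c16 by simp
    then have inv2: "?r \<circ> ?r = id" using cD0 Lr by simp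
    have "card {F, a, b} \<le> 2 \<or> ?DZ - {a, b} \<subseteq> ?DD \<or> ?DZ - {F, b} \<subseteq> ?DD \<or> ?DZ - {F, a} \<subseteq> ?DD"
    proof (rule ccontr)
      assume H: "\<not> ?thesis"
      have n0: "\<not> card {F, a, b} \<le> 2" using H by blast
      have n1: "\<not> ?DZ - {a, b} \<subseteq> ?DD" using H by blast
      have n2: "\<not> ?DZ - {F, b} \<subseteq> ?DD" using H by blast
      have n3: "\<not> ?DZ - {F, a} \<subseteq> ?DD" using H by blast
      have dist: "F \<noteq> a" "F \<noteq> b" "a \<noteq> b" using n0 by (auto simp: card_insert_if split: if_splits)
      obtain x1 where x1: "x1 \<in> ?DZ" "x1 \<notin> {a, b}" "x1 \<notin> ?DD" using n1 by blast
      have "x1 = F" using x1 sub by blast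
      then have FD0: "F \<in> ?DZ" using x1 by simp
      obtain x2 where x2: "x2 \<in> ?DZ" "x2 \<notin> {F, b}" "x2 \<notin> ?DD" using n2 by blast
      have "x2 = a" using x2 sub by blast
      then have aD: "a \<notin> ?DD" and aT: "a \<in> Theta" using x2 by auto
      obtain x3 where x3: "x3 \<in> ?DZ" "x3 \<notin> {F, a}" "x3 \<notin> ?DD" using n3 by blast
      have "x3 = b" using x3 sub by blast
      then have bD: "b \<notin> ?DD" and bT: "b \<in> Theta" using x3 by auto
      have qa: "q a \<noteq> F" using qb dist qinj by (metis injD)
      have pb: "p b \<noteq> F" using pa dist pinj by (metis injD)
      have "tri F p a = tri F q a" using aD aT dist by auto
      then have e1: "p F = q a" using pa qa dist by (simp add: tri_def)
      have "tri F p b = tri F q b" using bD bT dist by auto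
      then have e2: "p b = q F" using qb pb dist by (simp add: tri_def)
      have "?r F = a" using e1 M24_inv_apply1[OF q] by simp
      moreover have "?r a = b" using pa b_def by simp
      ultimately have "(?r \<circ> ?r) F = b" by simp
      then show False using inv2 dist by simp
    qed
    then show ?thesis
    proof (elim disjE)
      assume "card {F, a, b} \<le> 2" then show ?thesis using key[OF sub] e16 by simp
    next
      assume "?DZ - {a, b} \<subseteq> ?DD" then show ?thesis using key[of "{a, b}"] e16 by (simp add: card_insert_le_m1)
    next
      assume "?DZ - {F, b} \<subseteq> ?DD" then show ?thesis using key[of "{F, b}"] e16 by (simp add: card_insert_le_m1)
    next
      assume "?DZ - {F, a} \<subseteq> ?DD" then show ?thesis using key[of "{F, a}"] e16 by (simp add: card_insert_le_m1)
    qed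
  qed
qed

lemma tri_inj: assumes F: "F \<in> Theta" shows "inj_on (tri F) M24"
proof (rule inj_onI, rule ccontr)
  fix p q assume p: "p \<in> M24" and q: "q \<in> M24" and e: "tri F p = tri F q" and pq: "p \<noteq> q"
  have "14 \<le> card {x \<in> Theta - {F}. tri F p x \<noteq> tri F q x}" using dist_main[OF F p q pq] .
  then show False using e by simp
qed

lemma Mnd_ge: assumes "perm_code n d A" shows "card A \<le> Mnd n d"
proof -
  have sub: "{A. perm_code n d A} \<subseteq> Pow {p. p permutes {0..<n}}" by (auto simp: perm_code_def)
  have "finite {A. perm_code n d A}"
    by (rule finite_subset[OF sub]) (simp add: finite_permutations)
  then have fin: "finite (card ` {A. perm_code n d A})" by simp
  have "card A \<in> card ` {A. perm_code n d A}" using assms by simp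
  then show ?thesis unfolding Mnd_def by (rule Max_ge[OF fin])
qed

lemma code_from:
  assumes X: "X \<subseteq> M24" and R: "R \<subseteq> Theta - {23}" and fx: "\<forall>p\<in>X. \<forall>y\<in>R. tri 23 p y = y"
    and n: "{0..<n} = Theta - {23} - R"
  shows "perm_code n 14 (tri 23 ` X) \<and> card (tri 23 ` X) = card X"
proof -
  have F: "(23::nat) \<in> Theta" by (simp add: Theta_def)
  have "card (tri 23 ` X) = card X" using tri_inj[OF F] X by (meson card_image inj_on_subset)
  moreover have "perm_code n 14 (tri 23 ` X)"
    unfolding perm_code_def
  proof (intro conjI ballI impI)
    fix f assume "f \<in> tri 23 ` X"
    then obtain p where p: "p \<in> X" "f = tri 23 p" by auto
    have "tri 23 p permutes (Theta - {23})" using tri_perm[OF F] p X by auto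
    moreover have "\<forall>y\<in>R. tri 23 p y = y" using fx p by blast
    ultimately have "tri 23 p permutes (Theta - {23} - R)" by (rule permutes_remove)
    then show "f permutes {0..<n}" unfolding n p(2) .
  next
    fix f g assume "f \<in> tri 23 ` X" "g \<in> tri 23 ` X" "f \<noteq> g"
    then obtain p q where pq: "p \<in> X" "q \<in> X" "f = tri 23 p" "g = tri 23 q" by auto
    then have "p \<noteq> q" using \<open>f \<noteq> g\<close> by auto
    then have "14 \<le> card {x \<in> Theta - {23}. tri 23 p x \<noteq> tri 23 q x}"
      using dist_main[OF F] pq X by auto
    moreover have "{x \<in> Theta - {23}. tri 23 p x \<noteq> tri 23 q x} = {x \<in> {0..<n}. f x \<noteq> g x}"
    proof (rule set_eqI)
      fix x
      have "x \<in> R \<Longrightarrow> tri 23 p x = tri 23 q x" using fx pq by simp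
      then show "x \<in> {x \<in> Theta - {23}. tri 23 p x \<noteq> tri 23 q x} \<longleftrightarrow> x \<in> {x \<in> {0..<n}. f x \<noteq> g x}"
        unfolding n pq(3,4) by blast
    qed
    ultimately show "14 \<le> hd_on {0..<n} f g" by (simp add: hd_on_def)
  qed
  ultimately show ?thesis by simp
qed

lemma partB: "card M24 \<le> Mnd 23 14"
proof -
  have n: "{0..<23} = Theta - {23} - {}" by (auto simp: Theta_def)
  have "perm_code 23 14 (tri 23 ` M24) \<and> card (tri 23 ` M24) = card M24"
    by (rule code_from[OF subset_refl _ _ n]) auto
  then show ?thesis using Mnd_ge by metis
qed

definition U1 where "U1 = pl (fst u1)"
definition U2 where "U2 = pl (fst u2)"

lemma u_chk: "chk (fst u1) (snd u1)" "chk (fst u2) (snd u2)" by code_simp+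
lemma U_M24: "U1 \<in> M24" "U2 \<in> M24" using chk_M24 u_chk by (auto simp: U1_def U2_def)
lemma U1_vals: "U1 22 = 23" "U1 23 = 22" "U1 21 = 21" by (simp_all add: U1_def pl_def u1_def)
lemma U2_vals: "U2 22 = 22" "U2 21 = 23" "U2 23 = 21" by (simp_all add: U2_def pl_def u2_def)

lemma S_fix: "g \<in> S k \<Longrightarrow> j < k \<Longrightarrow> g (bl ! j) = bl ! j" by (simp add: S_def)

lemma S1_fix: "g \<in> S 1 \<Longrightarrow> g 22 = 22" using S_fix[of g 1 0] by (simp add: bl_def)
lemma S2_fix: "g \<in> S 2 \<Longrightarrow> g 22 = 22 \<and> g 21 = 21" using S_fix[of g 2 0] S_fix[of g 2 1] by (simp add: bl_def)
lemma S3_fix: "g \<in> S 3 \<Longrightarrow> g 22 = 22 \<and> g 21 = 21 \<and> g 23 = 23"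
  using S_fix[of g 3 0] S_fix[of g 3 1] S_fix[of g 3 2] by (simp add: bl_def)

lemma U_inv: "inv U2 22 = 22" "inv U2 23 = 21" "inv U2 21 = 23"
  using M24_inv_apply1[OF U_M24(2), of 22] M24_inv_apply1[OF U_M24(2), of 21] M24_inv_apply1[OF U_M24(2), of 23] U2_vals
  by simp_all

lemma finS: "finite (S 1)" "finite (S 2)" "finite (S 3)"
  using card_S1 card_S2 card_S3 by (auto intro: card_ge_0_finite)

lemma S_M24': "S k \<subseteq> M24" by (auto simp: S_def)

lemma tri_val: "tri 23 p x = (if x = 23 then 23 else if p x = 23 then p 23 else p x)" by (simp add: tri_def)

lemma partC: "card M24 div 23 \<le> Mnd 22 14"
proof -
  let ?V = "\<lambda>h. U1 \<circ> U2 \<circ> h \<circ> inv U2"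
  define X where "X = S 1 \<union> ?V ` S 2"
  have VM: "?V h \<in> M24" if "h \<in> S 2" for h
  proof -
    have "h \<in> M24" using that S_M24' by blast
    then show ?thesis using M24_comp[OF M24_comp[OF M24_comp[OF U_M24(1) U_M24(2)]] M24_inv[OF U_M24(2)]] by blast
  qed
  have XM: "X \<subseteq> M24" unfolding X_def using S_M24'[of 1] VM by blast
  have V22: "?V h 22 = 23" "?V h 23 = 22" if "h \<in> S 2" for h
    using S2_fix[OF that] U_inv U1_vals U2_vals by simp_all
  have fx: "\<forall>p\<in>X. \<forall>y\<in>{22}. tri 23 p y = y"
  proof (intro ballI)
    fix p y assume p: "p \<in> X" and y: "y \<in> {22::nat}"
    show "tri 23 p y = y"
    proof (cases "p \<in> S 1")
      case True then show ?thesis using S1_fix[OF True] y by (simp add: tri_val)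
    next
      case False then obtain h where "h \<in> S 2" "p = ?V h" using p X_def by auto
      then show ?thesis using V22 y by (simp add: tri_val)
    qed
  qed
  have n: "{0..<22} = Theta - {23} - {22}" by (auto simp: Theta_def)
  have pc: "perm_code 22 14 (tri 23 ` X) \<and> card (tri 23 ` X) = card X"
    by (rule code_from[OF XM _ fx n]) (auto simp: Theta_def)
  have injV: "inj_on ?V (S 2)"
  proof (rule inj_onI)
    fix h h' assume "h \<in> S 2" "h' \<in> S 2" and e: "?V h = ?V h'"
    have "U1 (U2 (h x)) = U1 (U2 (h' x))" for x
      using fun_cong[OF e, of "U2 x"] M24_inv_apply1[OF U_M24(2)] by simp
    then show "h = h'" using M24_inj[OF U_M24(1)] M24_inj[OF U_M24(2)] by (auto simp: fun_eq_iff dest: injD)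
  qed
  have disj: "S 1 \<inter> ?V ` S 2 = {}"
  proof -
    have "p \<notin> S 1" if "p \<in> ?V ` S 2" for p
    proof -
      from that obtain h where "h \<in> S 2" "p = ?V h" by blast
      then have "p 22 = 23" using V22 by simp
      then show ?thesis using S1_fix by force
    qed
    then show ?thesis by blast
  qed
  have "card X = card (S 1) + card (?V ` S 2)"
    unfolding X_def by (rule card_Un_disjoint) (use finS disj in auto)
  also have "... = 10644480" using card_image[OF injV] card_S1 card_S2 by simp
  finally have "card X = 10644480" .
  moreover have "card M24 div 23 = 10644480" using card_M24 by simp
  ultimately show ?thesis using pc Mnd_ge by metis
qed

lemma partD: "card M24 div (23 * 22) \<le> Mnd 21 14"
proof -
  let ?A = "\<lambda>h. U1 \<circ> h"
  let ?B = "\<lambda>h. U2 \<circ> h"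
  define X where "X = S 2 \<union> ?A ` S 3 \<union> ?B ` S 3"
  have AM: "?A h \<in> M24" "?B h \<in> M24" if "h \<in> S 3" for h
  proof -
    have "h \<in> M24" using that S_M24' by blast
    then show "?A h \<in> M24" "?B h \<in> M24" using M24_comp U_M24 by blast+
  qed
  have XM: "X \<subseteq> M24" unfolding X_def using S_M24'[of 2] AM by blast
  have Av: "?A h 22 = 23" "?A h 23 = 22" "?A h 21 = 21" if "h \<in> S 3" for h
    using S3_fix[OF that] U1_vals by simp_all
  have Bv: "?B h 22 = 22" "?B h 21 = 23" "?B h 23 = 21" if "h \<in> S 3" for h
    using S3_fix[OF that] U2_vals by simp_all
  have fx: "\<forall>p\<in>X. \<forall>y\<in>{22, 21}. tri 23 p y = y"
  proof (intro ballI)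
    fix p y assume p: "p \<in> X" and y: "y \<in> {22::nat, 21}"
    consider "p \<in> S 2" | h where "h \<in> S 3" "p = ?A h" | h where "h \<in> S 3" "p = ?B h"
      using p X_def by blast
    then show "tri 23 p y = y"
    proof cases
      case 1 then show ?thesis using S2_fix[OF 1] y by (auto simp: tri_val)
    next
      case 2 then show ?thesis using Av[OF 2(1)] y by (auto simp: tri_val)
    next
      case 3 then show ?thesis using Bv[OF 3(1)] y by (auto simp: tri_val)
    qed
  qed
  have n: "{0..<21} = Theta - {23} - {22, 21}" by (auto simp: Theta_def)
  have pc: "perm_code 21 14 (tri 23 ` X) \<and> card (tri 23 ` X) = card X"
    by (rule code_from[OF XM _ fx n]) (auto simp: Theta_def)
  have injA: "inj_on ?A (S 3)" "inj_on ?B (S 3)"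
  proof -
    have i1: "inj U1" "inj U2" using M24_inj U_M24 by auto
    show "inj_on ?A (S 3)"
    proof (rule inj_onI)
      fix h h' assume "h \<in> S 3" "h' \<in> S 3" and e: "?A h = ?A h'"
      have "U1 (h x) = U1 (h' x)" for x using fun_cong[OF e, of x] by simp
      then have "h x = h' x" for x using i1(1) by (meson injD)
      then show "h = h'" by (simp add: fun_eq_iff)
    qed
    show "inj_on ?B (S 3)"
    proof (rule inj_onI)
      fix h h' assume "h \<in> S 3" "h' \<in> S 3" and e: "?B h = ?B h'"
      have "U2 (h x) = U2 (h' x)" for x using fun_cong[OF e, of x] by simp
      then have "h x = h' x" for x using i1(2) by (meson injD)
      then show "h = h'" by (simp add: fun_eq_iff)
    qed
  qed
  have d1: "S 2 \<inter> ?A ` S 3 = {}"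
  proof -
    have "p \<notin> S 2" if "p \<in> ?A ` S 3" for p
    proof -
      from that obtain h where "h \<in> S 3" "p = ?A h" by blast
      then have "p 22 = 23" using Av by simp
      then show ?thesis using S2_fix by force
    qed
    then show ?thesis by blast
  qed
  have d2: "(S 2 \<union> ?A ` S 3) \<inter> ?B ` S 3 = {}"
  proof -
    have "p \<notin> S 2 \<union> ?A ` S 3" if "p \<in> ?B ` S 3" for p
    proof -
      from that obtain h where "h \<in> S 3" "p = ?B h" by blast
      then have e: "p 22 = 22" "p 21 = 23" using Bv by simp_all
      have "p \<notin> S 2" using e S2_fix by force
      moreover have "p \<notin> ?A ` S 3"
      proof
        assume "p \<in> ?A ` S 3"
        then obtain h' where "h' \<in> S 3" "p = ?A h'" by blast
        then have "p 22 = 23" using Av by simp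
        then show False using e by simp
      qed
      ultimately show ?thesis by blast
    qed
    then show ?thesis by blast
  qed
  have "card X = card (S 2 \<union> ?A ` S 3) + card (?B ` S 3)"
    unfolding X_def by (rule card_Un_disjoint) (use finS d2 in auto)
  also have "card (S 2 \<union> ?A ` S 3) = card (S 2) + card (?A ` S 3)"
    by (rule card_Un_disjoint) (use finS d1 in auto)
  finally have "card X = card (S 2) + card (?A ` S 3) + card (?B ` S 3)" .
  also have "... = 483840" using card_image[OF injA(1)] card_image[OF injA(2)] card_S2 card_S3 by simp
  finally have "card X = 483840" .
  moreover have "card M24 div (23 * 22) = 483840" using card_M24 by simp
  ultimately show ?thesis using pc Mnd_ge by metis
qed

lemma partA: "F \<in> Theta \<Longrightarrow> \<forall>p\<in>tri F ` M24. \<forall>q\<in>tri F ` M24. p \<noteq> q \<longrightarrow> 14 \<le> hd_on (Theta - {F}) p q"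
proof (intro ballI impI)
  fix p q assume F: "F \<in> Theta" and "p \<in> tri F ` M24" "q \<in> tri F ` M24" "p \<noteq> q"
  then obtain p' q' where "p' \<in> M24" "q' \<in> M24" "p = tri F p'" "q = tri F q'" "p' \<noteq> q'" by auto
  then show "14 \<le> hd_on (Theta - {F}) p q" using dist_main[OF F] by (simp add: hd_on_def)
qed

theorem proposition18:
  fixes F :: nat
  assumes "F \<in> Theta"
  shows "(\<forall>p\<in>tri F ` M24. \<forall>q\<in>tri F ` M24. p \<noteq> q \<longrightarrow> 14 \<le> hd_on (Theta - {F}) p q)
    \<and> card M24 = 244823040 \<and> card M24 \<le> Mnd 23 14
    \<and> card M24 div 23 = 10644480 \<and> card M24 div 23 \<le> Mnd 22 14
    \<and> card M24 div (23 * 22) = 483840 \<and> card M24 div (23 * 22) \<le> Mnd 21 14"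
  using partA[OF assms] card_M24 partB partC partD by simp

end
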